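(* Suppose $\sigma^2>0=\lambda(\mathbb R)$ (so $\psi(\beta)=\tfrac12\sigma^2\beta^2+\mu\beta$ and $\psi^h(\beta)=\mu\frac{e^{\beta h}-e^{-\beta h}}{2h}+\sigma^2\frac{e^{\beta h}+e^{-\beta h}-2}{2h^2}$), and let $q\ge0$. If $q=\mu=0$, then $\Delta^{(q)}_W(x,h)=0$ for all $h\in(0,h_\star)$ and $x\in\mathbb Z_h^{++}$. If $q\vee|\mu|>0$, then: (i) there exist $A_0,h_0\in(0,\infty)$ such that for all $h\in(0,h_0)$ and all $x\in\mathbb Z_h^{++}$ with $xh^2\le1$: $|\Delta^{(q)}_W(x,h)|\le A_0h^2(1+x)e^{\alpha_+x}$; (ii) for any nested sequence $h_n\downarrow0$ (i.e. $h_n/h_{n+1}\in\mathbb N$) and any $x\in\bigcup_n\mathbb Z_{h_n}^{++}$, $$\lim_{n\to\infty}\frac{\Delta^{(q)}_W(x,h_n)}{h_n^2}=\frac{q^2}{2(\mu^2+2\sigma^2q)}W^{(q)}(x)+\frac{x}{\sqrt{\mu^2+2\sigma^2q}}\bigl(e^{\alpha_+x}\theta_+-e^{\alpha_-x}\theta_-\bigr)$$ (for $q=0$ this limit equals $-\frac23\frac{\mu^2x}{(\sigma^2)^3}e^{-2\mu x/\sigma^2}$), where $\alpha_\pm=\frac{-\mu\pm\sqrt{\mu^2+2q\sigma^2}}{\sigma^2}$ and $\theta_\pm=\frac{\mu^3\sqrt{2q\sigma^2+\mu^2}\pm(\frac12q^2(\sigma^2)^2-\mu^4-\mu^2\sig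ma^2q)}{3(\sigma^2)^3\sqrt{2q\sigma^2+\mu^2}}$.
   Context: $X$ is the Lévy process $\sigma B_t+\mu t$ ($B$ standard Brownian motion, $\sigma^2>0$). For $h>0$, $\mathbb Z_h=h\mathbb Z$, $\mathbb Z_h^{++}=\mathbb Z_h\cap(0,\infty)$; $h_\star>0$ is such that for $h\in(0,h_\star)$ the function $\psi^h$ above is the Laplace exponent of a compound Poisson process on $\mathbb Z_h$. For $q\ge0$: $\Phi(q)$, $\Phi^h(q)$ are the largest roots of $\psi=q$, $\psi^h=q$ on $[0,\infty)$; $W^{(q)}$ vanishes on $(-\infty,0)$ and is the continuous nondecreasing function on $[0,\infty)$ with Laplace transform $1/(\psi(\beta)-q)$ for $\beta>\Phi(q)$ (explicitly $W^{(q)}(x)=(e^{\alpha_+x}-e^{\alpha_-x})/\sqrt{\mu^2+2\sigma^2q}$ when $q\vee|\mu|>0$); $W^{(q)}_h$ vanishes on $(-\infty,0)$ and on $[0,\infty)$ is the unique right-continuous function constant on each $[kh,(k+1)h)$, of exponential order, with Laplace transform $\frac{e^{\beta h}-1}{\beta h(\psi^h(\beta)-q)}$ for $\beta>\Phi^h(q)$. $\Delta^{(q)}_W(x,h):=W^{(q)}(x)-W^{(q)}_h(x-h)$. *)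

theory Defs
  imports "HOL-Analysis.Analysis"
begin

text \<open>Brownian motion with drift: X_t = sigma B_t + mu t, s2 = sigma^2 > 0.\<close>

definition psi :: "real \<Rightarrow> real \<Rightarrow> real \<Rightarrow> real" where
  "psi s2 mu \<beta> = s2 * \<beta>^2 / 2 + mu * \<beta>"

definition psi_h :: "real \<Rightarrow> real \<Rightarrow> real \<Rightarrow> real \<Rightarrow> real" where
  "psi_h s2 mu h \<beta> = mu * (exp (\<beta> * h) - exp (- \<beta> * h)) / (2 * h)
      + s2 * (exp (\<beta> * h) + exp (- \<beta> * h) - 2) / (2 * h^2)"

definition Phi_h :: "real \<Rightarrow> real \<Rightarrow> real \<Rightarrow> real \<Rightarrow> real" where
  "Phi_h s2 mu h q = (GREATEST b. 0 \<le> b \<and> psi_h s2 mu h b = q)"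

definition alpha_plus :: "real \<Rightarrow> real \<Rightarrow> real \<Rightarrow> real" where
  "alpha_plus s2 mu q = (- mu + sqrt (mu^2 + 2 * q * s2)) / s2"

definition alpha_minus :: "real \<Rightarrow> real \<Rightarrow> real \<Rightarrow> real" where
  "alpha_minus s2 mu q = (- mu - sqrt (mu^2 + 2 * q * s2)) / s2"

definition theta_plus :: "real \<Rightarrow> real \<Rightarrow> real \<Rightarrow> real" where
  "theta_plus s2 mu q = (mu^3 * sqrt (2 * q * s2 + mu^2)
      + (q^2 * s2^2 / 2 - mu^4 - mu^2 * s2 * q)) / (3 * s2^3 * sqrt (2 * q * s2 + mu^2))"

definition theta_minus :: "real \<Rightarrow> real \<Rightarrow> real \<Rightarrow> real" where
  "theta_minus s2 mu q = (mu^3 * sqrt (2 * q * s2 + mu^2)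
      - (q^2 * s2^2 / 2 - mu^4 - mu^2 * s2 * q)) / (3 * s2^3 * sqrt (2 * q * s2 + mu^2))"

definition W :: "real \<Rightarrow> real \<Rightarrow> real \<Rightarrow> real \<Rightarrow> real" where
  "W s2 mu q x =
     (if x < 0 then 0
      else if max q \<bar>mu\<bar> > 0 then
        (exp (alpha_plus s2 mu q * x) - exp (alpha_minus s2 mu q * x)) / sqrt (mu^2 + 2 * s2 * q)
      else 2 * x / s2)"

definition is_W_h :: "real \<Rightarrow> real \<Rightarrow> real \<Rightarrow> real \<Rightarrow> (real \<Rightarrow> real) \<Rightarrow> bool" where
  "is_W_h s2 mu h q f \<longleftrightarrow>
     (\<forall>x<0. f x = 0) \<and>
     (\<forall>x\<ge>0. continuous (at_right x) f) \<and>
     (\<forall>k::nat. \<forall>x\<in>{real k * h..<(real k + 1) * h}. f x = f (real k * h)) \<and>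
     (\<exists>C c. \<forall>x\<ge>0. \<bar>f x\<bar> \<le> C * exp (c * x)) \<and>
     (\<forall>\<beta> > Phi_h s2 mu h q.
        ((\<lambda>x. exp (- \<beta> * x) * f x) has_integral
           ((exp (\<beta> * h) - 1) / (\<beta> * h * (psi_h s2 mu h \<beta> - q)))) {0..})"

definition W_h :: "real \<Rightarrow> real \<Rightarrow> real \<Rightarrow> real \<Rightarrow> real \<Rightarrow> real" where
  "W_h s2 mu h q = (THE f. is_W_h s2 mu h q f)"

definition Delta_W :: "real \<Rightarrow> real \<Rightarrow> real \<Rightarrow> real \<Rightarrow> real \<Rightarrow> real" where
  "Delta_W s2 mu q x h = W s2 mu q x - W_h s2 mu h q (x - h)"

definition Zpp :: "real \<Rightarrow> real set" where
  "Zpp h = {x. \<exists>k::int. x = real_of_int k * h} \<inter> {0<..}"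

end

theory Submission
  imports Defs "HOL-Real_Asymp.Real_Asymp"
begin

lemma piece_integral:
  fixes a b c :: real and g :: "real \<Rightarrow> real"
  assumes "0 \<le> a" "a \<le> b" "(g has_integral I) {a..b}"
  shows "((\<lambda>x. if a \<le> x \<and> x < b then g x else 0) has_integral I) {0..}"
proof -
  have "((\<lambda>x. if a \<le> x \<and> x < b then g x else 0) has_integral I) {a..b}"
    by (rule has_integral_spike_finite[of "{b}" _ _ g]) (use assms in auto)
  then show ?thesis
    by (rule has_integral_on_superset) (use assms in auto)
qed

lemma exp_piece:
  fixes a b \<beta> :: real
  assumes "a \<le> b" "\<beta> > 0"
  shows "((\<lambda>x. exp (-\<beta>*x)) has_integral (exp (-\<beta>*a) - exp (-\<beta>*b))/\<beta>) {a..b}"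
proof -
  have "((\<lambda>x. exp (-\<beta>*x)) has_integral ((\<lambda>x. - exp (-\<beta>*x)/\<beta>) b - (\<lambda>x. - exp (-\<beta>*x)/\<beta>) a)) {a..b}"
    apply (rule fundamental_theorem_of_calculus)
    using assms apply simp
    unfolding has_real_derivative_iff_has_vector_derivative [symmetric]
    apply (auto intro!: derivative_eq_intros)
    using assms by (auto simp: field_simps)
  then show ?thesis by (simp add: field_simps diff_divide_distrib)
qed

lemma step_laplace:
  fixes h \<beta> C R :: real and w :: "nat \<Rightarrow> real" and f :: "real \<Rightarrow> real"
  assumes h: "h > 0" and b: "\<beta> > 0" and R1: "R \<ge> 1" and RB: "R < exp (\<beta>*h)"
    and wb: "\<And>k. \<bar>w k\<bar> \<le> C * R^k" and fw: "\<And>x. x \<ge> 0 \<Longrightarrow> f x = w (nat \<lfloor>x/h\<rfloor>)"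
  shows "summable (\<lambda>k. w k * exp(-\<beta>*h)^k)"
    "((\<lambda>x. exp(-\<beta>*x) * f x) has_integral ((1 - exp(-\<beta>*h))/\<beta> * (\<Sum>k. w k * exp(-\<beta>*h)^k))) {0..}"
proof -
  define z where "z = exp(-\<beta>*h)"
  have z0: "z > 0" and z1: "z < 1" using h b by (auto simp: z_def)
  have Rz: "R * z < 1" using RB by (simp add: z_def exp_minus field_simps)
  have C0: "C \<ge> 0" using wb[of 0] by simp
  have sg: "summable (\<lambda>k. C * (R*z)^k)"
    by (rule summable_mult) (rule summable_geometric, use Rz R1 z0 in simp)
  show sm: "summable (\<lambda>k. w k * exp(-\<beta>*h)^k)"
    unfolding z_def[symmetric]
  proof (rule summable_comparison_test'[OF sg])
    fix n show "norm (w n * z ^ n) \<le> C * (R * z) ^ n"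
      using wb[of n] z0 by (simp add: abs_mult power_mult_distrib mult_right_mono)
  qed
  define F where "F n x = (if x < real n * h then exp(-\<beta>*x) * f x else 0)" for n x
  have Fint: "(F n has_integral ((1 - z)/\<beta> * (\<Sum>k<n. w k * z^k))) {0..}" for n
  proof (induction n)
    case 0
    have "(F 0 has_integral 0) {0..}"
      by (rule has_integral_eq[of _ "\<lambda>_. 0"]) (auto simp: F_def)
    then show ?case by simp
  next
    case (Suc n)
    have p: "((\<lambda>x. if real n * h \<le> x \<and> x < real (Suc n) * h then w n * exp (-\<beta>*x) else 0)
       has_integral (w n * ((exp (-\<beta>*(real n*h)) - exp (-\<beta>*(real (Suc n)*h)))/\<beta>))) {0..}"
      apply (rule piece_integral)
      using h apply simp
      using h apply simp
      apply (rule has_integral_mult_right)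
      apply (rule exp_piece) using h b by auto
    have e1: "exp (-\<beta>*(real n*h)) = z^n"
      by (simp add: z_def exp_of_nat_mult[symmetric] mult_ac)
    have e2: "exp (-\<beta>*(real (Suc n)*h)) = z^Suc n"
    proof -
      have "exp(-\<beta>*(real (Suc n)*h)) = exp(real (Suc n) * (-\<beta>*h))" by (simp add: mult_ac)
      then show ?thesis by (simp only: exp_of_nat_mult z_def)
    qed
    have "((\<lambda>x. F n x + (if real n * h \<le> x \<and> x < real (Suc n) * h then w n * exp (-\<beta>*x) else 0))
       has_integral ((1 - z)/\<beta> * (\<Sum>k<n. w k * z^k) + w n * ((z^n - z^Suc n)/\<beta>))) {0..}"
      using has_integral_add[OF Suc.IH p] unfolding e1 e2 .
    moreover have "F (Suc n) x = F n x + (if real n * h \<le> x \<and> x < real (Suc n) * h then w n * exp (-\<beta>*x) else 0)"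
      if "x \<in> {0..}" for x
    proof -
      have fx: "f x = w n" if "real n * h \<le> x" "x < real (Suc n) * h"
      proof -
        have "\<lfloor>x/h\<rfloor> = int n"
          using that h by (subst floor_eq_iff) (auto simp: field_simps)
        then show ?thesis using fw[of x] \<open>x \<in> {0..}\<close> by simp
      qed
      show ?thesis using fx h unfolding F_def
        by (auto simp: field_simps mult_le_cancel_right not_less)
    qed
    ultimately have "(F (Suc n) has_integral ((1 - z)/\<beta> * (\<Sum>k<n. w k * z^k) + w n * ((z^n - z^Suc n)/\<beta>))) {0..}"
      using has_integral_eq by (smt (verit, best))
    moreover have "(1 - z)/\<beta> * (\<Sum>k<Suc n. w k * z^k) = (1 - z)/\<beta> * (\<Sum>k<n. w k * z^k) + w n * ((z^n - z^Suc n)/\<beta>)"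
      using b by (simp add: field_simps)
    ultimately show ?case by simp
  qed
  define a where "a = \<beta> - ln R / h"
  have a0: "a > 0"
  proof -
    have "ln R < \<beta> * h" using ln_less_cancel_iff[of R "exp(\<beta>*h)"] RB R1 by simp
    then show ?thesis using h by (simp add: a_def field_simps)
  qed
  have dom: "norm (F n x) \<le> C * exp (-a*x)" if "x \<in> {0..}" for n x
  proof -
    have x0: "x \<ge> 0" using that by simp
    define k where "k = nat \<lfloor>x/h\<rfloor>"
    have k: "real k \<le> x/h" using x0 h by (simp add: k_def)
    have "R^k = exp (real k * ln R)" using R1 by (simp add: exp_of_nat_mult)
    also have "\<dots> \<le> exp (x/h * ln R)" using mult_right_mono[OF k, of "ln R"] R1 by simp
    finally have Rk: "R^k \<le> exp (x/h * ln R)" .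
    have "\<bar>f x\<bar> \<le> C * exp (x/h * ln R)"
      using fw[OF x0] wb[of k] Rk C0 unfolding k_def[symmetric]
      by (metis mult_left_mono order_trans)
    then have "exp(-\<beta>*x) * \<bar>f x\<bar> \<le> exp(-\<beta>*x) * (C * exp (x/h * ln R))"
      by (simp add: mult_left_mono)
    also have "\<dots> = C * exp (-a*x)"
    proof -
      have "exp(-\<beta>*x) * exp (x/h * ln R) = exp (-a*x)"
        unfolding mult_exp_exp by (simp add: a_def algebra_simps)
      then show ?thesis by simp
    qed
    finally show ?thesis unfolding F_def using C0 by (auto simp: abs_mult)
  qed
  have gi: "(\<lambda>x. C * exp (-a*x)) integrable_on {0..}"
    using integrable_on_cmult_left[OF integrable_on_exp_minus_to_infinity[OF a0, of 0], of C] by simp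
  have conv: "(\<lambda>n. F n x) \<longlonglongrightarrow> exp(-\<beta>*x) * f x" for x
  proof -
    obtain N where N: "x/h < real N" using reals_Archimedean2 by blast
    have "eventually (\<lambda>n. F n x = exp(-\<beta>*x) * f x) sequentially"
    proof (rule eventually_sequentiallyI[of N])
      fix n assume "N \<le> n"
      then have "x/h < real n" using N by linarith
      then have "x < real n * h" using h by (simp add: field_simps)
      then show "F n x = exp(-\<beta>*x) * f x" by (simp add: F_def)
    qed
    then show ?thesis by (rule tendsto_eventually)
  qed
  have lim: "(\<lambda>n. (1 - z)/\<beta> * (\<Sum>k<n. w k * z^k)) \<longlonglongrightarrow> (1 - z)/\<beta> * (\<Sum>k. w k * z^k)"
    by (intro tendsto_mult_left summable_LIMSEQ) (use sm in \<open>simp add: z_def\<close>)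
  show "((\<lambda>x. exp(-\<beta>*x) * f x) has_integral ((1 - exp(-\<beta>*h))/\<beta> * (\<Sum>k. w k * exp(-\<beta>*h)^k))) {0..}"
    unfolding z_def[symmetric]
    by (rule has_integral_dominated_convergence[OF Fint gi _ _ lim]) (use dom conv in auto)
qed

lemma powser_unique0:
  fixes d :: "nat \<Rightarrow> real"
  assumes r: "r > 0" and R: "R > 0" and db: "\<And>k. \<bar>d k\<bar> \<le> C * R^k"
    and z: "\<And>z. 0 < z \<Longrightarrow> z < r \<Longrightarrow> (\<Sum>k. d k * z^k) = 0"
  shows "d k = 0"
proof (induction k rule: less_induct)
  case (less k)
  define a where "a j = d (j + k)" for j
  define g where "g x = (\<Sum>j. a j * x^j)" for x :: real
  have sumd: "summable (\<lambda>n. d n * x^n)" if "\<bar>x\<bar> < 1/R" for x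
  proof (rule summable_comparison_test')
    have "R * \<bar>x\<bar> < 1" using that R by (simp add: field_simps)
    then show "summable (\<lambda>n. C * (R*\<bar>x\<bar>)^n)"
      by (intro summable_mult summable_geometric) (use R in auto)
    fix n show "norm (d n * x^n) \<le> C * (R*\<bar>x\<bar>)^n"
      using mult_right_mono[OF db[of n], of "\<bar>x\<bar>^n"] by (simp add: abs_mult power_mult_distrib power_abs mult_ac)
  qed
  have sma: "(\<lambda>j. a j * x^j) sums g x" if "norm x < 1/R" for x
  proof -
    have "summable (\<lambda>j. a j * x^j)"
    proof (cases "x = 0")
      case True then show ?thesis by simp
    next
      case False
      have "summable (\<lambda>n. d (n + k) * x^(n+k))"
        using sumd[of x] that summable_iff_shift[of "\<lambda>n. d n * x^n" k] by simp
      then have "summable (\<lambda>n. (d (n + k) * x^(n+k)) / x^k)"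
        by (rule summable_divide)
      then show ?thesis using False by (simp add: a_def power_add)
    qed
    then show ?thesis by (simp add: g_def summable_sums)
  qed
  have lim: "(g \<longlongrightarrow> a 0) (at 0)"
    by (rule powser_limit_0[of "1/R"]) (use R sma in auto)
  have "eventually (\<lambda>x. g x = 0) (at_right 0)"
  proof -
    have "eventually (\<lambda>x. 0 < x \<and> x < min r (1/R)) (at_right 0)"
      using eventually_at_right_real[of 0 "min r (1/R)"] r R by simp
    then show ?thesis
    proof (rule eventually_mono)
      fix x assume x: "0 < x \<and> x < min r (1/R)"
      have s: "summable (\<lambda>n. d n * x^n)" using sumd x by auto
      have "(\<Sum>n. d n * x^n) = (\<Sum>i<k. d i * x^i) + (\<Sum>n. d (n + k) * x^(n+k))"
        using suminf_split_initial_segment[OF s, of k] by simp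
      also have "(\<Sum>i<k. d i * x^i) = 0" using less by simp
      also have "(\<Sum>n. d (n + k) * x^(n+k)) = (\<Sum>n. x^k * (a n * x^n))"
        by (simp add: a_def power_add mult_ac)
      also have "\<dots> = x^k * g x"
        unfolding g_def using sma[of x] x by (intro suminf_mult) (auto simp: sums_iff)
      finally have "x^k * g x = 0" using z[of x] x by simp
      then show "g x = 0" using x by simp
    qed
  qed
  then have "(g \<longlongrightarrow> 0) (at_right 0)" by (rule tendsto_eventually)
  moreover have "(g \<longlongrightarrow> a 0) (at_right 0)"
    using lim by (simp add: filterlim_at_split)
  ultimately have "a 0 = 0" using tendsto_unique[OF trivial_limit_at_right_real] by metis
  then show ?case by (simp add: a_def)
qed

lemma is_W_h_step:
  assumes h: "h > 0" and f: "is_W_h s2 mu h q f" and x: "x \<ge> 0"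
  shows "f x = f (real (nat \<lfloor>x/h\<rfloor>) * h)"
proof -
  define k where "k = nat \<lfloor>x/h\<rfloor>"
  have k1: "real k \<le> x/h" using x h by (simp add: k_def)
  have k2: "x/h < real k + 1" using x h by (simp add: k_def)
  have "x \<in> {real k * h..<(real k + 1) * h}"
    using k1 k2 h by (auto simp: field_simps)
  then show ?thesis using f unfolding is_W_h_def k_def by blast
qed

lemma is_W_h_bound:
  assumes h: "h > 0" and f: "is_W_h s2 mu h q f"
  obtains C c where "C \<ge> 0" "c \<ge> 0" "\<And>k. \<bar>f (real k * h)\<bar> \<le> C * exp (c*h)^k"
proof -
  obtain C c where Cc: "\<And>x. x \<ge> 0 \<Longrightarrow> \<bar>f x\<bar> \<le> C * exp (c * x)"
    using f unfolding is_W_h_def by blast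
  have C0: "C \<ge> 0" using Cc[of 0] by simp
  show ?thesis
  proof (rule that[OF C0, of "max c 0"])
    fix k :: nat
    have "\<bar>f (real k * h)\<bar> \<le> C * exp (c * (real k * h))" using Cc[of "real k * h"] h by simp
    also have "\<dots> \<le> C * exp (max c 0 * (real k * h))"
      using C0 h by (intro mult_left_mono) (auto intro!: mult_right_mono)
    also have "exp (max c 0 * (real k * h)) = exp (max c 0 * h)^k"
      by (simp add: exp_of_nat_mult[symmetric] mult_ac)
    finally show "\<bar>f (real k * h)\<bar> \<le> C * exp (max c 0 * h)^k" .
  qed auto
qed

lemma is_W_h_unique:
  assumes h: "h > 0" and f: "is_W_h s2 mu h q f" and g: "is_W_h s2 mu h q g"
  shows "f = g"
proof -
  obtain Cf cf where Cf: "Cf \<ge> 0" "cf \<ge> 0" "\<And>k. \<bar>f (real k * h)\<bar> \<le> Cf * exp (cf*h)^k"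
    using is_W_h_bound[OF h f] by blast
  obtain Cg cg where Cg: "Cg \<ge> 0" "cg \<ge> 0" "\<And>k. \<bar>g (real k * h)\<bar> \<le> Cg * exp (cg*h)^k"
    using is_W_h_bound[OF h g] by blast
  define c where "c = max cf cg"
  define R where "R = exp (c*h)"
  have R1: "R \<ge> 1" using h Cf Cg by (simp add: R_def c_def)
  have bf: "\<bar>f (real k * h)\<bar> \<le> Cf * R^k" for k
  proof -
    have "exp (cf*h) \<le> R" unfolding R_def c_def using h by simp
    then have "exp (cf*h)^k \<le> R^k" by (rule power_mono) simp
    then show ?thesis using Cf(3)[of k] Cf(1) by (meson mult_left_mono order_trans)
  qed
  have bg: "\<bar>g (real k * h)\<bar> \<le> Cg * R^k" for k
  proof -
    have "exp (cg*h) \<le> R" unfolding R_def c_def using h by simp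
    then have "exp (cg*h)^k \<le> R^k" by (rule power_mono) simp
    then show ?thesis using Cg(3)[of k] Cg(1) by (meson mult_left_mono order_trans)
  qed
  define wf where "wf k = f (real k * h)" for k
  define wg where "wg k = g (real k * h)" for k
  define d where "d k = wf k - wg k" for k
  define \<beta>0 where "\<beta>0 = max (Phi_h s2 mu h q) c + 1"
  have b0: "\<beta>0 > 0" "\<beta>0 > c" "\<beta>0 > Phi_h s2 mu h q"
    using Cf Cg by (auto simp: \<beta>0_def c_def)
  have "d k = 0" for k
  proof (rule powser_unique0[of "exp(-\<beta>0*h)" R _ "Cf + Cg"])
    show "exp(-\<beta>0*h) > 0" by simp
    show "R > 0" using R1 by simp
    show "\<bar>d k\<bar> \<le> (Cf + Cg) * R^k" for k
      using bf[of k] bg[of k] unfolding d_def wf_def wg_def by (simp add: algebra_simps)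
    fix z :: real assume z0: "0 < z" and zr: "z < exp(-\<beta>0*h)"
    define \<beta> where "\<beta> = - ln z / h"
    have ez: "exp(-\<beta>*h) = z" using h z0 by (simp add: \<beta>_def)
    have "ln z < -\<beta>0*h" using zr z0 by (metis ln_exp ln_less_cancel_iff exp_gt_zero)
    then have bb: "\<beta> > \<beta>0" using h by (simp add: \<beta>_def field_simps)
    have RB: "R < exp (\<beta>*h)" unfolding R_def using b0 bb h by simp
    have fw: "\<And>x. x \<ge> 0 \<Longrightarrow> f x = wf (nat \<lfloor>x/h\<rfloor>)"
      unfolding wf_def using is_W_h_step[OF h f] .
    have gw: "\<And>x. x \<ge> 0 \<Longrightarrow> g x = wg (nat \<lfloor>x/h\<rfloor>)"
      unfolding wg_def using is_W_h_step[OF h g] .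
    have bpos: "\<beta> > 0" using bb b0 by simp
    have bf': "\<And>k. \<bar>wf k\<bar> \<le> Cf * R^k" using bf unfolding wf_def .
    have bg': "\<And>k. \<bar>wg k\<bar> \<le> Cg * R^k" using bg unfolding wg_def .
    note Lf = step_laplace[OF h bpos R1 RB bf' fw]
    note Lg = step_laplace[OF h bpos R1 RB bg' gw]
    have If: "((\<lambda>x. exp (- \<beta> * x) * f x) has_integral
           ((exp (\<beta> * h) - 1) / (\<beta> * h * (psi_h s2 mu h \<beta> - q)))) {0..}"
      using f bb b0 unfolding is_W_h_def by auto
    have Ig: "((\<lambda>x. exp (- \<beta> * x) * g x) has_integral
           ((exp (\<beta> * h) - 1) / (\<beta> * h * (psi_h s2 mu h \<beta> - q)))) {0..}"
      using g bb b0 unfolding is_W_h_def by auto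
    have e1: "(1 - z)/\<beta> * (\<Sum>k. wf k * z^k) = (1 - z)/\<beta> * (\<Sum>k. wg k * z^k)"
      using has_integral_unique[OF Lf(2) If] has_integral_unique[OF Lg(2) Ig] bf bg
      unfolding ez wf_def wg_def by simp
    have "-\<beta>*h < 0" using h bpos by simp
    then have z1: "z < 1" using ez by (metis exp_less_one_iff)
    have e2: "(\<Sum>k. wf k * z^k) = (\<Sum>k. wg k * z^k)"
      using e1 z1 bpos by simp
    have sf: "summable (\<lambda>k. wf k * z^k)" using Lf(1) bf unfolding ez wf_def by simp
    have sg: "summable (\<lambda>k. wg k * z^k)" using Lg(1) bg unfolding ez wg_def by simp
    show "(\<Sum>k. d k * z^k) = 0"
      using suminf_diff[OF sf sg] e2 unfolding d_def by (simp add: algebra_simps)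
  qed
  show "f = g"
  proof
    fix x show "f x = g x"
    proof (cases "x < 0")
      case True then show ?thesis using f g unfolding is_W_h_def by simp
    next
      case False
      then show ?thesis using is_W_h_step[OF h f, of x] is_W_h_step[OF h g, of x]
        \<open>d (nat \<lfloor>x/h\<rfloor>) = 0\<close> unfolding d_def wf_def wg_def by simp
    qed
  qed
qed

lemma W_h_eq:
  assumes "h > 0" "is_W_h s2 mu h q f"
  shows "W_h s2 mu h q = f"
  unfolding W_h_def using assms is_W_h_unique by blast

definition stepf :: "real \<Rightarrow> (nat \<Rightarrow> real) \<Rightarrow> real \<Rightarrow> real" where
  "stepf h w x = (if x < 0 then 0 else w (nat \<lfloor>x/h\<rfloor>))"

lemma floor_in_step:
  fixes h y :: real and k :: nat
  assumes "h > 0" "real k * h \<le> y" "y < (real k + 1) * h"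
  shows "nat \<lfloor>y/h\<rfloor> = k"
proof -
  have "\<lfloor>y/h\<rfloor> = int k" using assms by (subst floor_eq_iff) (auto simp: field_simps)
  then show ?thesis by simp
qed

lemma floor_props:
  fixes h x :: real
  assumes h: "h > 0" and x: "x \<ge> 0"
  shows "real (nat \<lfloor>x/h\<rfloor>) * h \<le> x" "x < (real (nat \<lfloor>x/h\<rfloor>) + 1) * h"
proof -
  have a: "real_of_int \<lfloor>x/h\<rfloor> \<le> x/h" "x/h < real_of_int \<lfloor>x/h\<rfloor> + 1"
    by linarith+
  have "0 \<le> \<lfloor>x/h\<rfloor>" using x h by simp
  then have b: "real (nat \<lfloor>x/h\<rfloor>) = real_of_int \<lfloor>x/h\<rfloor>" by simp
  show "real (nat \<lfloor>x/h\<rfloor>) * h \<le> x" using mult_right_mono[OF a(1), of h] h unfolding b by simp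
  show "x < (real (nat \<lfloor>x/h\<rfloor>) + 1) * h" using mult_strict_right_mono[OF a(2) h] h unfolding b by simp
qed

lemma is_W_h_stepf:
  fixes w :: "nat \<Rightarrow> real"
  assumes h: "h > 0" and c0: "c \<ge> 0" and bd: "\<And>k. \<bar>w k\<bar> \<le> C * exp (c*h)^k"
    and lap: "\<And>\<beta>. \<beta> > Phi_h s2 mu h q \<Longrightarrow> \<exists>C R. R \<ge> 1 \<and> R < exp (\<beta>*h) \<and> (\<forall>k. \<bar>w k\<bar> \<le> C * R^k) \<and> \<beta> > 0
        \<and> (1 - exp(-\<beta>*h))/\<beta> * (\<Sum>k. w k * exp(-\<beta>*h)^k) = (exp (\<beta> * h) - 1) / (\<beta> * h * (psi_h s2 mu h \<beta> - q))"
  shows "is_W_h s2 mu h q (stepf h w)"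
  unfolding is_W_h_def
proof (intro conjI allI impI ballI)
  show "stepf h w x = 0" if "x < 0" for x using that by (simp add: stepf_def)
next
  fix x :: real assume x: "x \<ge> 0"
  define k where "k = nat \<lfloor>x/h\<rfloor>"
  have k1: "real k * h \<le> x" using floor_props[OF h x] by (simp add: k_def)
  have k2: "x < (real k + 1) * h" using floor_props[OF h x] by (simp add: k_def)
  have "eventually (\<lambda>y. y \<in> {x<..<(real k + 1) * h}) (at_right x)"
    by (rule eventually_at_right_real) (use k2 in simp)
  then have "eventually (\<lambda>y. stepf h w y = stepf h w x) (at_right x)"
  proof (rule eventually_mono)
    fix y assume y: "y \<in> {x<..<(real k + 1) * h}"
    have "nat \<lfloor>y/h\<rfloor> = k" using y k1 by (intro floor_in_step h) auto
    then show "stepf h w y = stepf h w x" using y x by (simp add: stepf_def k_def)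
  qed
  then have "(stepf h w \<longlongrightarrow> stepf h w x) (at_right x)"
    by (rule tendsto_eventually[THEN tendsto_cong[THEN iffD1, rotated]]) (auto elim: eventually_mono)
  then show "continuous (at_right x) (stepf h w)"
    by (simp add: continuous_within)
next
  fix k :: nat and x assume x: "x \<in> {real k * h..<(real k + 1) * h}"
  have "nat \<lfloor>x/h\<rfloor> = k" using x by (intro floor_in_step h) auto
  moreover have "nat \<lfloor>(real k * h)/h\<rfloor> = k" using h by simp
  moreover have "x \<ge> 0" using x h by (auto intro: order_trans[rotated])
  moreover have "\<not> real k * h < 0" using h by (simp add: not_less)
  ultimately show "stepf h w x = stepf h w (real k * h)" by (simp add: stepf_def)
next
  show "\<exists>C c. \<forall>x\<ge>0. \<bar>stepf h w x\<bar> \<le> C * exp (c * x)"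
  proof (intro exI allI impI)
    fix x :: real assume x: "x \<ge> 0"
    define k where "k = nat \<lfloor>x/h\<rfloor>"
    have k1: "real k * h \<le> x" using floor_props[OF h x] by (simp add: k_def)
    have C0: "C \<ge> 0" using bd[of 0] by simp
    have "exp (c*h)^k = exp (c * (real k * h))" by (simp add: exp_of_nat_mult[symmetric] mult_ac)
    also have "\<dots> \<le> exp (c * x)" using k1 c0 by (simp add: mult_left_mono)
    finally have "C * exp (c*h)^k \<le> C * exp (c*x)" using C0 by (simp add: mult_left_mono)
    then show "\<bar>stepf h w x\<bar> \<le> C * exp (c * x)"
      using bd[of k] x by (simp add: stepf_def k_def)
  qed
next
  fix \<beta> assume b: "\<beta> > Phi_h s2 mu h q"
  obtain C' R where CR: "R \<ge> 1" "R < exp (\<beta>*h)" "\<forall>k. \<bar>w k\<bar> \<le> C' * R^k" "\<beta> > 0"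
     "(1 - exp(-\<beta>*h))/\<beta> * (\<Sum>k. w k * exp(-\<beta>*h)^k) = (exp (\<beta> * h) - 1) / (\<beta> * h * (psi_h s2 mu h \<beta> - q))"
    using lap[OF b] by blast
  have "\<And>x. x \<ge> 0 \<Longrightarrow> stepf h w x = w (nat \<lfloor>x/h\<rfloor>)" by (simp add: stepf_def)
  moreover have wb: "\<And>k. \<bar>w k\<bar> \<le> C' * R^k" using CR(3) by blast
  ultimately have "((\<lambda>x. exp (- \<beta> * x) * stepf h w x) has_integral ((1 - exp(-\<beta>*h))/\<beta> * (\<Sum>k. w k * exp(-\<beta>*h)^k))) {0..}"
    using step_laplace(2)[OF h CR(4) CR(1) CR(2) wb] by blast
  with CR(5)
  show "((\<lambda>x. exp (- \<beta> * x) * stepf h w x) has_integral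
           ((exp (\<beta> * h) - 1) / (\<beta> * h * (psi_h s2 mu h \<beta> - q)))) {0..}" by simp
qed

definition Shh :: "real \<Rightarrow> real \<Rightarrow> real \<Rightarrow> real \<Rightarrow> real" where
  "Shh s2 mu q h = sqrt (mu^2 + 2*q* s2 + q^2*h^2)"
definition rpl :: "real \<Rightarrow> real \<Rightarrow> real \<Rightarrow> real \<Rightarrow> real" where
  "rpl s2 mu q h = (s2 + q*h^2 + h * Shh s2 mu q h) / (s2 + mu*h)"
definition rmi :: "real \<Rightarrow> real \<Rightarrow> real \<Rightarrow> real \<Rightarrow> real" where
  "rmi s2 mu q h = (s2 + q*h^2 - h * Shh s2 mu q h) / (s2 + mu*h)"
definition wgen :: "real \<Rightarrow> real \<Rightarrow> real \<Rightarrow> real \<Rightarrow> nat \<Rightarrow> real" where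
  "wgen s2 mu q h k = (rpl s2 mu q h ^ (k+1) - rmi s2 mu q h ^ (k+1)) / Shh s2 mu q h"

lemma psi_h_E:
  assumes h: "h > 0"
  shows "psi_h s2 mu h b - q = ((mu*h+s2)*exp(b*h)^2 - 2*(s2+q*h^2)*exp(b*h) + (s2-mu*h)) / (2*h^2*exp(b*h))"
proof -
  define E where "E = exp (b*h)"
  have E0: "E > 0" by (simp add: E_def)
  have em: "exp (- b * h) = 1/E" by (simp add: E_def exp_minus field_simps)
  show ?thesis unfolding psi_h_def em E_def[symmetric] using h E0
    by (simp add: field_simps power2_eq_square)
qed

lemma fac_gen:
  fixes D E a t :: real
  assumes "D \<noteq> 0"
  shows "D*(E - (a+t)/D)*(E - (a-t)/D) = D*E^2 - 2*a*E + (a^2-t^2)/D"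
  using assms by (simp add: field_simps power2_eq_square)

lemma gen_facts:
  fixes s2 mu q h :: real
  assumes s2: "s2 > 0" and q: "q \<ge> 0" and nz: "max q \<bar>mu\<bar> > 0" and h: "h > 0" and hm: "h * \<bar>mu\<bar> < s2"
  shows "Shh s2 mu q h > 0" "(Shh s2 mu q h)^2 = mu^2 + 2*q* s2 + q^2*h^2"
    "s2 + mu*h > 0" "rmi s2 mu q h > 0" "rmi s2 mu q h < rpl s2 mu q h" "rpl s2 mu q h \<ge> 1"
    "\<And>E. (mu*h+s2)*E^2 - 2*(s2+q*h^2)*E + (s2-mu*h) = (s2+mu*h)*(E - rpl s2 mu q h)*(E - rmi s2 mu q h)"
    "rpl s2 mu q h - rmi s2 mu q h = 2*h*Shh s2 mu q h / (s2+mu*h)"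
proof -
  define S where "S = Shh s2 mu q h"
  define D where "D = s2 + mu*h"
  define a where "a = s2 + q*h^2"
  define t where "t = h * S"
  have A0: "mu^2 + 2*q* s2 + q^2*h^2 > 0"
  proof (cases "q > 0")
    case True then show ?thesis using s2 by (simp add: add_nonneg_pos add_pos_nonneg)
  next
    case False then have "mu \<noteq> 0" using nz q by auto
    then show ?thesis using q s2 by (simp add: add_pos_nonneg)
  qed
  show S0: "Shh s2 mu q h > 0" unfolding Shh_def using A0 by simp
  show S2: "(Shh s2 mu q h)^2 = mu^2 + 2*q* s2 + q^2*h^2" unfolding Shh_def using A0 by simp
  have muh: "\<bar>mu*h\<bar> < s2" using hm h by (simp add: abs_mult mult.commute)
  show D0: "s2 + mu*h > 0" using muh by linarith
  have Dm: "s2 - mu*h > 0" using muh by linarith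
  have at: "a^2 - t^2 = D * (s2 - mu*h)"
    unfolding a_def t_def D_def power_mult_distrib S_def S2 by (simp add: algebra_simps power2_eq_square)
  have t0: "t > 0" using S0 h by (simp add: t_def S_def)
  have a0: "a > 0" using s2 q by (simp add: a_def add_pos_nonneg)
  have ta: "t < a"
  proof (rule ccontr)
    assume "\<not> t < a"
    then have "a^2 \<le> t^2" using a0 by (intro power_mono) auto
    then show False using at D0 Dm unfolding D_def by (smt (verit) mult_pos_pos)
  qed
  show "rmi s2 mu q h > 0" unfolding rmi_def S_def[symmetric] using ta D0
    by (simp add: a_def t_def)
  show "rmi s2 mu q h < rpl s2 mu q h" unfolding rmi_def rpl_def S_def[symmetric] using t0 D0
    by (simp add: t_def divide_strict_right_mono)
  have "\<bar>mu\<bar> \<le> S" unfolding S_def Shh_def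
    using real_sqrt_le_mono[of "mu^2" "mu^2 + 2*q* s2 + q^2*h^2"] q s2 by simp
  then have "mu * h \<le> h * S" using h by (simp add: mult.commute)
  moreover have "q * h^2 \<ge> 0" using q by simp
  ultimately show "rpl s2 mu q h \<ge> 1" unfolding rpl_def S_def[symmetric] using D0
    by (simp add: field_simps)
  show "rpl s2 mu q h - rmi s2 mu q h = 2*h*Shh s2 mu q h / (s2+mu*h)"
    unfolding rpl_def rmi_def using D0 by (simp add: diff_divide_distrib[symmetric])
  fix E :: real
  have "D*(E - (a+t)/D)*(E - (a-t)/D) = D*E^2 - 2*a*E + (a^2-t^2)/D"
    using D0 by (intro fac_gen) (simp add: D_def)
  also have "\<dots> = (mu*h+s2)*E^2 - 2*(s2+q*h^2)*E + (s2-mu*h)"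
  proof -
    have "(a^2-t^2)/D = s2 - mu*h" unfolding at using D0 unfolding D_def by simp
    then show ?thesis by (simp add: D_def a_def algebra_simps)
  qed
  finally show "(mu*h+s2)*E^2 - 2*(s2+q*h^2)*E + (s2-mu*h) = (s2+mu*h)*(E - rpl s2 mu q h)*(E - rmi s2 mu q h)"
    unfolding rpl_def rmi_def S_def[symmetric] by (simp add: D_def a_def t_def)
qed

lemma alg_gen0:
  fixes E u v D S h \<beta> :: real
  assumes "u \<noteq> 0" "v \<noteq> 0" "E > 0" "D > 0" "S > 0" "h > 0" "\<beta> > 0"
  shows "(1 - 1/E)/\<beta> * ((E^2*(2*h*S/D)/(u * v))/S) = (E-1)/(\<beta>*h*(D*u * v/(2*h^2*E)))"
  using assms by (simp add: field_simps power2_eq_square)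

lemma alg_gen:
  fixes E rp rm D S h \<beta> :: real
  assumes "E > rp" "rp > rm" "rm > 0" "D > 0" "S > 0" "h > 0" "\<beta> > 0" "rp - rm = 2*h*S/D"
  shows "(1 - 1/E)/\<beta> * ((rp/(1-rp/E) - rm/(1-rm/E))/S) = (E-1)/(\<beta>*h*(D*(E-rp)*(E-rm)/(2*h^2*E)))"
proof -
  have E0: "E > 0" using assms by simp
  have a: "E - rp \<noteq> 0" "E - rm \<noteq> 0" using assms by auto
  have b: "1 - rp/E = (E - rp)/E" "1 - rm/E = (E-rm)/E" using E0 by (auto simp: field_simps)
  have c: "rp/(1-rp/E) - rm/(1-rm/E) = E^2*(rp - rm)/((E-rp)*(E-rm))"
    unfolding b using a E0 by (simp add: field_simps power2_eq_square)
  show ?thesis unfolding c assms(8) using alg_gen0[OF a E0 assms(4-7)] by simp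
qed

lemma Phi_h_gen:
  fixes s2 mu q h :: real
  assumes s2: "s2 > 0" and q: "q \<ge> 0" and nz: "max q \<bar>mu\<bar> > 0" and h: "h > 0" and hm: "h * \<bar>mu\<bar> < s2"
  shows "Phi_h s2 mu h q = ln (rpl s2 mu q h) / h"
proof -
  note G = gen_facts[OF s2 q nz h hm]
  define rp where "rp = rpl s2 mu q h"
  define rm where "rm = rmi s2 mu q h"
  have root: "psi_h s2 mu h b = q \<longleftrightarrow> exp(b*h) = rp \<or> exp(b*h) = rm" for b
  proof -
    have e: "psi_h s2 mu h b - q = (s2+mu*h)*(exp(b*h)-rp)*(exp(b*h)-rm)/(2*h^2*exp(b*h))"
      using psi_h_E[OF h, of s2 mu b q] G(7)[of "exp(b*h)"] by (simp add: rp_def rm_def)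
    have "psi_h s2 mu h b = q \<longleftrightarrow> psi_h s2 mu h b - q = 0" by simp
    also have "\<dots> \<longleftrightarrow> (s2+mu*h)*(exp(b*h)-rp)*(exp(b*h)-rm) = 0"
      unfolding e using h by simp
    also have "\<dots> \<longleftrightarrow> exp(b*h) = rp \<or> exp(b*h) = rm" using G(3) by simp
    finally show ?thesis .
  qed
  have rp1: "rp \<ge> 1" using G(6) by (simp add: rp_def)
  show ?thesis unfolding Phi_h_def
  proof (rule Greatest_equality)
    have "exp (ln rp / h * h) = rp" using rp1 h by simp
    then show "0 \<le> ln (rpl s2 mu q h) / h \<and> psi_h s2 mu h (ln (rpl s2 mu q h) / h) = q"
      using root rp1 h by (simp add: rp_def)
  next
    fix y assume "0 \<le> y \<and> psi_h s2 mu h y = q"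
    then have "exp(y*h) = rp \<or> exp(y*h) = rm" using root by simp
    then have "exp(y*h) \<le> rp" using G(5) by (auto simp: rp_def rm_def)
    then have "ln (exp (y*h)) \<le> ln rp" using rp1 by (subst ln_le_cancel_iff) auto
    then have "y*h \<le> ln rp" by simp
    then show "y \<le> ln (rpl s2 mu q h) / h" using h by (simp add: rp_def field_simps)
  qed
qed

lemma is_W_h_gen:
  fixes s2 mu q h :: real
  assumes s2: "s2 > 0" and q: "q \<ge> 0" and nz: "max q \<bar>mu\<bar> > 0" and h: "h > 0" and hm: "h * \<bar>mu\<bar> < s2"
  shows "is_W_h s2 mu h q (stepf h (wgen s2 mu q h))"
proof -
  note G = gen_facts[OF s2 q nz h hm]
  define rp where "rp = rpl s2 mu q h"
  define rm where "rm = rmi s2 mu q h"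
  define S where "S = Shh s2 mu q h"
  have rp1: "rp \<ge> 1" "rm > 0" "rm < rp" "S > 0" using G by (auto simp: rp_def rm_def S_def)
  have wbd: "\<bar>wgen s2 mu q h k\<bar> \<le> (2*rp/S) * rp^k" for k
  proof -
    have "rm^(k+1) \<le> rp^(k+1)" using rp1 by (intro power_mono) auto
    moreover have "rm^(k+1) > 0" using rp1 by simp
    ultimately have "\<bar>rp^(k+1) - rm^(k+1)\<bar> \<le> 2 * rp^(k+1)" by simp
    then show ?thesis using rp1 unfolding wgen_def rp_def[symmetric] rm_def[symmetric] S_def[symmetric]
      by (simp add: field_simps)
  qed
  have ec: "exp (ln rp / h * h) = rp" using rp1 h by simp
  show ?thesis
  proof (rule is_W_h_stepf[OF h _ _ ])
    show "0 \<le> ln rp / h" using rp1 h by simp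
    show "\<bar>wgen s2 mu q h k\<bar> \<le> (2*rp/S) * exp (ln rp / h * h)^k" for k using wbd[of k] ec by simp
  next
    fix \<beta> assume b: "\<beta> > Phi_h s2 mu h q"
    then have b': "\<beta> > ln rp / h" using Phi_h_gen[OF s2 q nz h hm] by (simp add: rp_def)
    have bpos: "\<beta> > 0" using b' rp1 h by (smt (verit) divide_nonneg_pos ln_ge_zero)
    define E where "E = exp (\<beta>*h)"
    have "ln rp < \<beta>*h" using b' h by (simp add: field_simps)
    then have Erp: "rp < E" using rp1 unfolding E_def by (metis exp_less_cancel_iff exp_ln less_le_trans zero_less_one)
    have ez: "exp(-\<beta>*h) = 1/E" by (simp add: E_def exp_minus field_simps)
    have E0: "E > 0" by (simp add: E_def)
    have s1: "(\<lambda>k. rp^(k+1) * (1/E)^k) sums (rp / (1 - rp/E))"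
    proof -
      have "(\<lambda>k. (rp/E)^k) sums (1/(1 - rp/E))" using Erp rp1 E0 by (intro geometric_sums) (simp add: field_simps)
      from sums_mult[OF this, of rp] show ?thesis by (simp add: power_divide field_simps)
    qed
    have s2': "(\<lambda>k. rm^(k+1) * (1/E)^k) sums (rm / (1 - rm/E))"
    proof -
      have "(\<lambda>k. (rm/E)^k) sums (1/(1 - rm/E))" using Erp rp1 E0 by (intro geometric_sums) (simp add: field_simps)
      from sums_mult[OF this, of rm] show ?thesis by (simp add: power_divide field_simps)
    qed
    have "(\<lambda>k. wgen s2 mu q h k * exp(-\<beta>*h)^k) sums ((rp / (1 - rp/E) - rm / (1 - rm/E))/S)"
      unfolding ez wgen_def rp_def[symmetric] rm_def[symmetric] S_def[symmetric]
      using sums_divide[OF sums_diff[OF s1 s2'], of S] by (simp add: algebra_simps diff_divide_distrib)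
    then have sumeq: "(\<Sum>k. wgen s2 mu q h k * (1/E)^k) = (rp / (1 - rp/E) - rm / (1 - rm/E))/S"
      unfolding ez by (rule sums_unique[symmetric])
    have pe: "psi_h s2 mu h \<beta> - q = (s2+mu*h)*(E-rp)*(E-rm)/(2*h^2*E)"
      unfolding psi_h_E[OF h] G(7) E_def rp_def rm_def by simp
    have L: "(1 - exp(-\<beta>*h))/\<beta> * (\<Sum>k. wgen s2 mu q h k * exp(-\<beta>*h)^k) = (exp (\<beta> * h) - 1) / (\<beta> * h * (psi_h s2 mu h \<beta> - q))"
      unfolding ez E_def[symmetric] unfolding sumeq pe
      by (rule alg_gen[OF Erp rp1(3) rp1(2) G(3) rp1(4) h bpos G(8)[folded rp_def rm_def S_def]])
    have B: "\<forall>k. \<bar>wgen s2 mu q h k\<bar> \<le> (2*rp/S) * rp^k" using wbd by blast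
    have Erp': "rp < exp (\<beta>*h)" using Erp by (simp add: E_def)
    show "\<exists>C R. R \<ge> 1 \<and> R < exp (\<beta>*h) \<and> (\<forall>k. \<bar>wgen s2 mu q h k\<bar> \<le> C * R^k) \<and> \<beta> > 0
        \<and> (1 - exp(-\<beta>*h))/\<beta> * (\<Sum>k. wgen s2 mu q h k * exp(-\<beta>*h)^k) = (exp (\<beta> * h) - 1) / (\<beta> * h * (psi_h s2 mu h \<beta> - q))"
      apply (rule exI[of _ "2*rp/S"], rule exI[of _ rp])
      using rp1(1) Erp' B bpos L by (intro conjI)
  qed
qed

lemma W_h_gen:
  fixes s2 mu q h :: real
  assumes s2: "s2 > 0" and q: "q \<ge> 0" and nz: "max q \<bar>mu\<bar> > 0" and h: "h > 0" and hm: "h * \<bar>mu\<bar> < s2"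
  shows "W_h s2 mu h q = stepf h (wgen s2 mu q h)"
  by (rule W_h_eq[OF h is_W_h_gen[OF assms]])

definition wz :: "real \<Rightarrow> real \<Rightarrow> nat \<Rightarrow> real" where
  "wz s2 h k = 2 * (real k + 1) * h / s2"

lemma psi_h_zero:
  assumes h: "h > 0"
  shows "psi_h s2 0 h b - 0 = s2 * (exp(b*h) - 1)^2 / (2*h^2*exp(b*h))"
  using psi_h_E[OF h, of s2 0 b 0] by (simp add: power2_eq_square algebra_simps)

lemma alg_zero0:
  fixes u E \<beta> h s2 :: real
  assumes "u \<noteq> 0" "E > 0" "\<beta> > 0" "h > 0" "s2 > 0"
  shows "u/E/\<beta> * (2*h/s2*(1/(u/E)^2)) = u/(\<beta>*h*(s2*u^2/(2*h^2*E)))"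
  using assms by (simp add: field_simps power2_eq_square)

lemma Phi_h_zero:
  assumes s2: "s2 > 0" and h: "h > 0"
  shows "Phi_h s2 0 h 0 = 0"
  unfolding Phi_h_def
proof (rule Greatest_equality)
  show "0 \<le> (0::real) \<and> psi_h s2 0 h 0 = 0" using psi_h_zero[OF h, of s2 0] by simp
next
  fix y assume "0 \<le> y \<and> psi_h s2 0 h y = 0"
  then have "s2 * (exp(y*h) - 1)^2 / (2*h^2*exp(y*h)) = 0" using psi_h_zero[OF h, of s2 y] by simp
  then have "exp(y*h) = 1" using s2 h by simp
  then have "y * h = 0" by simp
  then show "y \<le> 0" using h by simp
qed

lemma is_W_h_zero:
  assumes s2: "s2 > 0" and h: "h > 0"
  shows "is_W_h s2 0 h 0 (stepf h (wz s2 h))"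
proof (rule is_W_h_stepf[OF h])
  show "0 \<le> 1/h" using h by simp
  show "\<bar>wz s2 h k\<bar> \<le> (2*h/s2) * exp (1/h * h)^k" for k
  proof -
    have "real k + 1 \<le> exp (real k)" using exp_ge_add_one_self[of "real k"] by linarith
    also have "exp (real k) = exp (1/h * h)^k" using h by (simp add: exp_of_nat_mult[symmetric])
    finally have "real k + 1 \<le> exp (1/h * h)^k" .
    then have "(2*h/s2) * (real k + 1) \<le> (2*h/s2) * exp (1/h * h)^k"
      by (rule mult_left_mono) (use s2 h in simp)
    moreover have "\<bar>wz s2 h k\<bar> = (2*h/s2) * (real k + 1)" using s2 h by (simp add: wz_def)
    ultimately show ?thesis by simp
  qed
next
  fix \<beta> assume "\<beta> > Phi_h s2 0 h 0"
  then have b: "\<beta> > 0" using Phi_h_zero[OF s2 h] by simp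
  define R where "R = exp (\<beta>*h/2)"
  define M where "M = max 1 (2/(\<beta>*h))"
  have R1: "R \<ge> 1" using b h by (simp add: R_def)
  have RB: "R < exp (\<beta>*h)" using b h by (simp add: R_def)
  have M1: "M \<ge> 1" "M * (\<beta>*h/2) \<ge> 1" using b h
    by (auto simp: M_def max_def field_simps)
  have wb: "\<forall>k. \<bar>wz s2 h k\<bar> \<le> (2*h/s2*M) * R^k"
  proof
    fix k
    have "R^k = exp (real k * (\<beta>*h/2))" by (simp add: R_def exp_of_nat_mult[symmetric])
    also have "\<dots> \<ge> 1 + real k * (\<beta>*h/2)" by (rule exp_ge_add_one_self)
    finally have "M * R^k \<ge> M * (1 + real k * (\<beta>*h/2))" using M1 by (simp add: mult_left_mono)
    moreover have "M * (1 + real k * (\<beta>*h/2)) = M + real k * (M * (\<beta>*h/2))" by (simp add: algebra_simps)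
    moreover have "real k * (M * (\<beta>*h/2)) \<ge> real k" using mult_left_mono[OF M1(2), of "real k"] by simp
    ultimately have "real k + 1 \<le> M * R^k" using M1 by linarith
    then have "(2*h/s2) * (real k + 1) \<le> (2*h/s2) * (M * R^k)"
      by (rule mult_left_mono) (use s2 h in simp)
    moreover have "\<bar>wz s2 h k\<bar> = (2*h/s2) * (real k + 1)" using s2 h by (simp add: wz_def)
    ultimately show "\<bar>wz s2 h k\<bar> \<le> (2*h/s2*M) * R^k" by (simp add: mult_ac)
  qed
  define E where "E = exp (\<beta>*h)"
  have E1: "E > 1" using b h by (simp add: E_def)
  have ez: "exp(-\<beta>*h) = 1/E" by (simp add: E_def exp_minus field_simps)
  have "(\<lambda>k. of_nat (Suc k) * (1/E)^k) sums (1/(1 - 1/E)^2)"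
    by (rule geometric_deriv_sums) (use E1 in simp)
  note this_sums = this
  have "(\<lambda>k. wz s2 h k * (1/E)^k) sums (2*h/s2 * (1/(1 - 1/E)^2))"
  proof -
    have "(\<lambda>k. wz s2 h k * (1/E)^k) = (\<lambda>k. 2*h/s2 * (of_nat (Suc k) * (1/E)^k))"
      by (rule ext) (simp add: wz_def)
    then show ?thesis using sums_mult[OF this_sums, of "2*h/s2"] by simp
  qed
  then have se: "(\<Sum>k. wz s2 h k * exp(-\<beta>*h)^k) = 2*h/s2 * (1/(1 - 1/E)^2)"
    unfolding ez by (rule sums_unique[symmetric])
  have pe: "psi_h s2 0 h \<beta> - 0 = s2 * (E - 1)^2 / (2*h^2*E)"
    using psi_h_zero[OF h, of s2 \<beta>] by (simp add: E_def)
  have L: "(1 - exp(-\<beta>*h))/\<beta> * (\<Sum>k. wz s2 h k * exp(-\<beta>*h)^k) = (exp (\<beta> * h) - 1) / (\<beta> * h * (psi_h s2 0 h \<beta> - 0))"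
  proof -
    have u: "1 - 1/E = (E - 1)/E" using E1 by (simp add: field_simps)
    show ?thesis unfolding se pe unfolding ez E_def[symmetric] u
      by (rule alg_zero0) (use E1 b h s2 in auto)
  qed
  show "\<exists>C R. R \<ge> 1 \<and> R < exp (\<beta>*h) \<and> (\<forall>k. \<bar>wz s2 h k\<bar> \<le> C * R^k) \<and> \<beta> > 0
        \<and> (1 - exp(-\<beta>*h))/\<beta> * (\<Sum>k. wz s2 h k * exp(-\<beta>*h)^k) = (exp (\<beta> * h) - 1) / (\<beta> * h * (psi_h s2 0 h \<beta> - 0))"
    apply (rule exI[of _ "2*h/s2*M"], rule exI[of _ R])
    using R1 RB wb b L by (intro conjI)
qed

lemma Zpp_nat:
  assumes h: "h > 0" and x: "x \<in> Zpp h"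
  obtains k :: nat where "k \<ge> 1" "x = real k * h"
proof -
  obtain j :: int where j: "x = real_of_int j * h" "x > 0" using x unfolding Zpp_def by auto
  then have "j > 0" using h by (simp add: zero_less_mult_iff)
  then show ?thesis using that[of "nat j"] j by simp
qed

lemma stepf_prev:
  assumes h: "h > 0" and k: "k \<ge> 1"
  shows "stepf h w (real k * h - h) = w (k - 1)"
proof -
  have "real k * h - h = real (k - 1) * h" using k by (simp add: of_nat_diff algebra_simps)
  moreover have "\<not> real (k - 1) * h < 0" using h by (simp add: not_less)
  ultimately show ?thesis using h by (simp add: stepf_def)
qed

lemma Delta_zero:
  assumes s2: "s2 > 0" and h: "h > 0" and x: "x \<in> Zpp h"
  shows "Delta_W s2 0 0 x h = 0"
proof -
  obtain k :: nat where k: "k \<ge> 1" "x = real k * h" using Zpp_nat[OF h x] by blast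
  have "W_h s2 0 h 0 = stepf h (wz s2 h)" by (rule W_h_eq[OF h is_W_h_zero[OF s2 h]])
  then have "W_h s2 0 h 0 (x - h) = wz s2 h (k - 1)" using stepf_prev[OF h k(1)] k by simp
  also have "\<dots> = 2 * x / s2" using k by (simp add: wz_def of_nat_diff algebra_simps)
  moreover have "\<not> real k * h < 0" using h by (simp add: not_less)
  ultimately show ?thesis using k h unfolding Delta_W_def W_def by simp
qed

lemma Delta_gen:
  fixes s2 mu q h :: real
  assumes s2: "s2 > 0" and q: "q \<ge> 0" and nz: "max q \<bar>mu\<bar> > 0" and h: "h > 0" and hm: "h * \<bar>mu\<bar> < s2"
    and k: "k \<ge> 1"
  shows "Delta_W s2 mu q (real k * h) h = W s2 mu q (real k * h) - (rpl s2 mu q h ^ k - rmi s2 mu q h ^ k) / Shh s2 mu q h"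
proof -
  have "W_h s2 mu h q (real k * h - h) = wgen s2 mu q h (k - 1)"
    using W_h_gen[OF s2 q nz h hm] stepf_prev[OF h k] by simp
  then show ?thesis unfolding Delta_W_def wgen_def using k by simp
qed

definition Af :: "real \<Rightarrow> real" where
  "Af y = (if y = 0 then 1/3 else (exp y - exp (-y) - 2*y)/y^3)"
definition Bf :: "real \<Rightarrow> real" where
  "Bf y = (if y = 0 then 1/12 else (exp y + exp (-y) - 2 - y^2)/y^4)"
definition E1f :: "real \<Rightarrow> real" where
  "E1f t = (if t = 0 then 1 else (exp t - 1)/t)"

lemma Af_id: "exp y - exp (-y) = 2*y + y^3 * Af y"
  by (simp add: Af_def)
lemma Bf_id: "exp y + exp (-y) - 2 = y^2 + y^4 * Bf y"
  by (simp add: Bf_def)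
lemma E1f_id: "exp t - 1 = t * E1f t"
  by (simp add: E1f_def)

lemma isCont_Af: "isCont Af 0"
proof -
  have l: "((\<lambda>y::real. (exp y - exp (-y) - 2*y)/y^3) \<longlongrightarrow> 1/3) (at 0)" by real_asymp
  have ev: "\<forall>\<^sub>F y in at 0. (exp y - exp (-y) - 2*y)/y^3 = Af y"
    using eventually_at_in_open[OF open_UNIV UNIV_I, of "0::real"] by (rule eventually_mono) (simp add: Af_def)
  have "(Af \<longlongrightarrow> 1/3) (at 0)" using tendsto_cong[OF ev] l by simp
  then show ?thesis by (simp add: isCont_def Af_def)
qed

lemma isCont_Bf: "isCont Bf 0"
proof -
  have l: "((\<lambda>y::real. (exp y + exp (-y) - 2 - y^2)/y^4) \<longlongrightarrow> 1/12) (at 0)" by real_asymp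
  have ev: "\<forall>\<^sub>F y in at 0. (exp y + exp (-y) - 2 - y^2)/y^4 = Bf y"
    using eventually_at_in_open[OF open_UNIV UNIV_I, of "0::real"] by (rule eventually_mono) (simp add: Bf_def)
  have "(Bf \<longlongrightarrow> 1/12) (at 0)" using tendsto_cong[OF ev] l by simp
  then show ?thesis by (simp add: isCont_def Bf_def)
qed

lemma isCont_E1f: "isCont E1f 0"
proof -
  have l: "((\<lambda>y::real. (exp y - 1)/y) \<longlongrightarrow> 1) (at 0)" by real_asymp
  have ev: "\<forall>\<^sub>F y in at 0. (exp y - 1)/y = E1f y"
    using eventually_at_in_open[OF open_UNIV UNIV_I, of "0::real"] by (rule eventually_mono) (simp add: E1f_def)
  have "(E1f \<longlongrightarrow> 1) (at 0)" using tendsto_cong[OF ev] l by simp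
  then show ?thesis by (simp add: isCont_def E1f_def)
qed

lemma key_identity:
  fixes s2 mu q h L a :: real
  assumes h: "h \<noteq> 0" and psi: "psi_h s2 mu h L = q" and qa: "s2 * a^2/2 + mu * a = q"
  shows "(L - a) * (s2 * (L + a) + 2*mu) = - (h^2) * (mu * L^3 * Af (L*h) + s2 * L^4 * Bf (L*h))"
proof -
  have e: "exp (- L * h) = exp (- (L*h))" by simp
  have "q = mu * (2*(L*h) + (L*h)^3 * Af (L*h)) / (2*h) + s2 * ((L*h)^2 + (L*h)^4 * Bf (L*h)) / (2*h^2)"
    using psi unfolding psi_h_def e Af_id Bf_id by simp
  also have "\<dots> = mu*L + mu*L^3*h^2*Af (L*h)/2 + s2*L^2/2 + s2*L^4*h^2*Bf (L*h)/2"
    using h by (simp add: field_simps power2_eq_square power3_eq_cube power4_eq_xxxx)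
  finally have q1: "q = mu*L + mu*L^3*h^2*Af (L*h)/2 + s2*L^2/2 + s2*L^4*h^2*Bf (L*h)/2" .
  have "(L - a) * (s2 * (L + a) + 2*mu) = 2*(s2*L^2/2 + mu*L) - 2*(s2*a^2/2 + mu*a)"
    by (simp add: algebra_simps power2_eq_square)
  also have "\<dots> = 2*(q - mu*L^3*h^2*Af (L*h)/2 - s2*L^4*h^2*Bf (L*h)/2) - 2*q"
    using q1 qa by simp
  finally show ?thesis by (simp add: algebra_simps)
qed

lemma root_limit:
  fixes s2 mu q a :: real and L :: "real \<Rightarrow> real"
  assumes Llim: "(L \<longlongrightarrow> a) (at_right 0)"
    and ev: "\<forall>\<^sub>F h in at_right 0. psi_h s2 mu h (L h) = q"
    and qa: "s2 * a^2/2 + mu * a = q" and nz: "s2 * a + mu \<noteq> 0"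
  shows "((\<lambda>h. (L h - a)/h^2) \<longlongrightarrow> - (mu * a^3 * (1/3) + s2 * a^4 * (1/12)) / (s2 * (a + a) + 2*mu)) (at_right 0)"
proof -
  define F where "F h = - (mu * L h^3 * Af (L h * h) + s2 * L h^4 * Bf (L h * h)) / (s2 * (L h + a) + 2*mu)" for h
  have hl: "((\<lambda>h::real. h) \<longlongrightarrow> 0) (at_right 0)" by (rule tendsto_ident_at)
  have Lh: "((\<lambda>h. L h * h) \<longlongrightarrow> 0) (at_right 0)"
    using tendsto_mult[OF Llim hl] by simp
  have A: "((\<lambda>h. Af (L h * h)) \<longlongrightarrow> 1/3) (at_right 0)"
    using isCont_tendsto_compose[OF isCont_Af Lh] by (simp add: Af_def)
  have B: "((\<lambda>h. Bf (L h * h)) \<longlongrightarrow> 1/12) (at_right 0)"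
    using isCont_tendsto_compose[OF isCont_Bf Lh] by (simp add: Bf_def)
  have den: "((\<lambda>h. s2 * (L h + a) + 2*mu) \<longlongrightarrow> s2 * (a + a) + 2*mu) (at_right 0)"
    by (intro tendsto_intros Llim)
  have den0: "s2 * (a + a) + 2*mu \<noteq> 0" using nz by (simp add: algebra_simps)
  have Flim: "(F \<longlongrightarrow> - (mu * a^3 * (1/3) + s2 * a^4 * (1/12)) / (s2 * (a + a) + 2*mu)) (at_right 0)"
    unfolding F_def by (intro tendsto_intros Llim A B den den0)
  have evne: "\<forall>\<^sub>F h in at_right 0. s2 * (L h + a) + 2*mu \<noteq> 0"
    using tendsto_imp_eventually_ne[OF den den0] .
  have evF: "\<forall>\<^sub>F h in at_right 0. F h = (L h - a)/h^2"
    using ev evne eventually_at_right_less[of 0]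
  proof eventually_elim
    case (elim h)
    have "(L h - a) * (s2 * (L h + a) + 2*mu) = - (h^2) * (mu * L h^3 * Af (L h*h) + s2 * L h^4 * Bf (L h*h))"
      by (rule key_identity) (use elim qa in auto)
    then show ?case using elim unfolding F_def by (simp add: field_simps)
  qed
  show ?thesis using tendsto_cong[OF evF] Flim by simp
qed

lemma S_facts:
  fixes s2 mu q :: real
  assumes s2: "s2 > 0" and q: "q \<ge> 0" and nz: "max q \<bar>mu\<bar> > 0"
  shows "mu^2 + 2 * q * s2 > 0" "sqrt (mu^2 + 2 * q * s2) > 0"
    "sqrt (mu^2 + 2 * q * s2)^2 = mu^2 + 2 * q * s2"
proof -
  show A0: "mu^2 + 2 * q * s2 > 0"
  proof (cases "q > 0")
    case True then show ?thesis using s2 by (simp add: add_nonneg_pos)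
  next
    case False then have "mu \<noteq> 0" using nz q by auto
    then show ?thesis using q s2 by (simp add: add_pos_nonneg)
  qed
  then show "sqrt (mu^2 + 2 * q * s2) > 0" by simp
  show "sqrt (mu^2 + 2 * q * s2)^2 = mu^2 + 2 * q * s2" using A0 by simp
qed

lemma alpha_facts:
  fixes s2 mu q :: real
  assumes s2: "s2 > 0" and q: "q \<ge> 0" and nz: "max q \<bar>mu\<bar> > 0"
  shows "s2 * alpha_plus s2 mu q ^2/2 + mu * alpha_plus s2 mu q = q"
    "s2 * alpha_minus s2 mu q ^2/2 + mu * alpha_minus s2 mu q = q"
    "s2 * alpha_plus s2 mu q + mu = sqrt (mu^2 + 2 * q * s2)"
    "s2 * alpha_minus s2 mu q + mu = - sqrt (mu^2 + 2 * q * s2)"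
    "alpha_minus s2 mu q \<le> alpha_plus s2 mu q"
proof -
  define S where "S = sqrt (mu^2 + 2 * q * s2)"
  have S2: "S^2 = mu^2 + 2 * q * s2" and S0: "S > 0" using S_facts[OF assms] by (auto simp: S_def)
  have "s2 * ((-mu + S)/s2)^2/2 + mu * ((-mu + S)/s2) = (S^2 - mu^2)/(2* s2)"
    using s2 by (simp add: field_simps power2_eq_square)
  then show "s2 * alpha_plus s2 mu q ^2/2 + mu * alpha_plus s2 mu q = q"
    unfolding alpha_plus_def S_def[symmetric] S2 using s2 by simp
  have "s2 * ((-mu - S)/s2)^2/2 + mu * ((-mu - S)/s2) = (S^2 - mu^2)/(2* s2)"
    using s2 by (simp add: field_simps power2_eq_square)
  then show "s2 * alpha_minus s2 mu q ^2/2 + mu * alpha_minus s2 mu q = q"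
    unfolding alpha_minus_def S_def[symmetric] S2 using s2 by simp
  show "s2 * alpha_plus s2 mu q + mu = sqrt (mu^2 + 2 * q * s2)"
    unfolding alpha_plus_def using s2 by simp
  show "s2 * alpha_minus s2 mu q + mu = - sqrt (mu^2 + 2 * q * s2)"
    unfolding alpha_minus_def using s2 by simp
  show "alpha_minus s2 mu q \<le> alpha_plus s2 mu q"
    unfolding alpha_minus_def alpha_plus_def using s2 S0 by (simp add: S_def divide_right_mono)
qed

lemma theta_alg:
  fixes S mu s2 q :: real
  assumes S2: "S^2 = mu^2 + 2 * q * s2" and S0: "S > 0" and s2: "s2 > 0"
  shows "- (mu * ((-mu + S)/s2)^3 * (1/3) + s2 * ((-mu + S)/s2)^4 * (1/12)) / (s2 * (((-mu + S)/s2) + ((-mu + S)/s2)) + 2*mu)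
      = - ((mu^3 * S + (q^2 * s2^2 / 2 - mu^4 - mu^2 * s2 * q)) / (3 * s2^3 * S))"
    "- (mu * ((-mu - S)/s2)^3 * (1/3) + s2 * ((-mu - S)/s2)^4 * (1/12)) / (s2 * (((-mu - S)/s2) + ((-mu - S)/s2)) + 2*mu)
      = - ((mu^3 * S - (q^2 * s2^2 / 2 - mu^4 - mu^2 * s2 * q)) / (3 * s2^3 * S))"
proof -
  have S4: "S^4 = (mu^2 + 2 * q * s2)^2" using S2 by (metis power2_eq_square power4_eq_xxxx mult.assoc)
  have p1: "(S - mu)^3 * (S + 3*mu) = S^4 - 6*S^2*mu^2 + 8*S*mu^3 - 3*mu^4"
    by (simp add: algebra_simps power2_eq_square power3_eq_cube power4_eq_xxxx)
  have p2: "(S + mu)^3 * (S - 3*mu) = S^4 - 6*S^2*mu^2 - 8*S*mu^3 - 3*mu^4"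
    by (simp add: algebra_simps power2_eq_square power3_eq_cube power4_eq_xxxx)
  have e1: "(S - mu)^3 * (S + 3*mu) = 8 * (mu^3 * S + (q^2 * s2^2 / 2 - mu^4 - mu^2 * s2 * q))"
    unfolding p1 S4 S2 by (simp add: algebra_simps power2_eq_square power3_eq_cube power4_eq_xxxx)
  have e2: "(S + mu)^3 * (S - 3*mu) = - 8 * (mu^3 * S - (q^2 * s2^2 / 2 - mu^4 - mu^2 * s2 * q))"
    unfolding p2 S4 S2 by (simp add: algebra_simps power2_eq_square power3_eq_cube power4_eq_xxxx)
  have gen: "- (mu * a^3 * (1/3) + s2 * a^4 * (1/12)) / (s2 * (a + a) + 2*mu) = - (a^3 * (s2 * a + 4 * mu)) / (24 * (s2*a + mu))" for a
  proof -
    have n: "mu*a^3*(1/3) + s2*a^4*(1/12) = (a^3*(s2*a + 4*mu))/12"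
      by (simp add: algebra_simps power3_eq_cube power4_eq_xxxx)
    have d: "s2*(a+a) + 2*mu = 2*(s2*a+mu)" by simp
    show ?thesis by (simp only: n d) simp
  qed
  have c1: "(s2 * ((-mu + S)/s2) + 4 * mu) = S + 3 * mu" "s2 * ((-mu + S)/s2) + mu = S"
    "((-mu + S)/s2)^3 = (S - mu)^3 / s2^3" using s2 by (simp_all add: power_divide)
  have c2a: "(s2 * ((-mu - S)/s2) + 4 * mu) = - (S - 3 * mu)" using s2 by (simp add: field_simps)
  have c2b: "s2 * ((-mu - S)/s2) + mu = - S" using s2 by (simp add: field_simps)
  have c2c00: "-mu - S = -(S + mu)" by simp
  have c2c0: "(-mu - S)/s2 = - ((S + mu)/s2)" unfolding c2c00 by (rule minus_divide_left[symmetric])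
  have c2c: "((-mu - S)/s2)^3 = - ((S + mu)^3 / s2^3)" unfolding c2c0 by (simp add: power_divide)
  note c2 = c2a c2b c2c
  have hh1: "(S - mu)^3 / s2^3 * (S + 3*mu) = 8 * (mu^3 * S + (q^2 * s2^2 / 2 - mu^4 - mu^2 * s2 * q)) / s2^3"
    unfolding times_divide_eq_left e1 by (rule refl)
  have hh2: "(S + mu)^3 / s2^3 * (S - 3*mu) = - 8 * (mu^3 * S - (q^2 * s2^2 / 2 - mu^4 - mu^2 * s2 * q)) / s2^3"
    unfolding times_divide_eq_left e2 by (rule refl)
  have gg1: "\<And>Y. - (8*Y/s2^3)/(24*S) = -(Y/(3* s2^3*S))" using s2 S0 by (simp add: field_simps)
  have gg2: "\<And>Y. - (- 8*Y/s2^3)/(24 * - S) = -(Y/(3* s2^3*S))" using s2 S0 by (simp add: field_simps)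
  show "- (mu * ((-mu + S)/s2)^3 * (1/3) + s2 * ((-mu + S)/s2)^4 * (1/12)) / (s2 * (((-mu + S)/s2) + ((-mu + S)/s2)) + 2*mu)
      = - ((mu^3 * S + (q^2 * s2^2 / 2 - mu^4 - mu^2 * s2 * q)) / (3 * s2^3 * S))"
  proof -
    have "- (mu * ((-mu + S)/s2)^3 * (1/3) + s2 * ((-mu + S)/s2)^4 * (1/12)) / (s2 * (((-mu + S)/s2) + ((-mu + S)/s2)) + 2*mu)
       = - (((-mu + S)/s2)^3 * (s2 * ((-mu + S)/s2) + 4 * mu)) / (24 * (s2*((-mu + S)/s2) + mu))" by (rule gen)
    also have "\<dots> = - ((S - mu)^3 / s2^3 * (S + 3*mu)) / (24 * S)" by (simp only: c1)
    also have "\<dots> = - ((mu^3 * S + (q^2 * s2^2 / 2 - mu^4 - mu^2 * s2 * q)) / (3 * s2^3 * S))"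
      by (simp only: hh1 gg1)
    finally show ?thesis .
  qed
  show "- (mu * ((-mu - S)/s2)^3 * (1/3) + s2 * ((-mu - S)/s2)^4 * (1/12)) / (s2 * (((-mu - S)/s2) + ((-mu - S)/s2)) + 2*mu)
      = - ((mu^3 * S - (q^2 * s2^2 / 2 - mu^4 - mu^2 * s2 * q)) / (3 * s2^3 * S))"
  proof -
    have "- (mu * ((-mu - S)/s2)^3 * (1/3) + s2 * ((-mu - S)/s2)^4 * (1/12)) / (s2 * (((-mu - S)/s2) + ((-mu - S)/s2)) + 2*mu)
       = - (((-mu - S)/s2)^3 * (s2 * ((-mu - S)/s2) + 4 * mu)) / (24 * (s2*((-mu - S)/s2) + mu))" by (rule gen)
    also have "\<dots> = - (- ((S + mu)^3 / s2^3) * - (S - 3 * mu)) / (24 * - S)" by (simp only: c2)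
    also have "\<dots> = - (- 8 * (mu^3 * S - (q^2 * s2^2 / 2 - mu^4 - mu^2 * s2 * q)) / s2^3) / (24 * - S)"
      by (simp only: minus_mult_minus hh2)
    also have "\<dots> = - ((mu^3 * S - (q^2 * s2^2 / 2 - mu^4 - mu^2 * s2 * q)) / (3 * s2^3 * S))"
      by (rule gg2)
    finally show ?thesis .
  qed
qed
lemma sqrt_deriv0:
  fixes s2 mu q :: real
  assumes A0: "mu^2 + 2 * q * s2 > 0"
  shows "((\<lambda>h. h * sqrt (mu^2 + 2 * q * s2 + q^2 * h^2)) has_real_derivative sqrt (mu^2 + 2 * q * s2)) (at 0)"
proof -
  have X: "((\<lambda>h. mu^2 + 2 * q * s2 + q^2 * h^2) has_real_derivative 0) (at 0)"
    by (rule DERIV_cong[OF DERIV_add[OF DERIV_const DERIV_cmult[OF DERIV_pow]]]) simp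
  have sq: "DERIV sqrt (mu^2 + 2 * q * s2 + q^2 * 0^2) :> inverse (sqrt (mu^2 + 2 * q * s2 + q^2 * 0^2)) / 2"
    by (rule DERIV_real_sqrt) (use A0 in simp)
  have Q: "((\<lambda>h. sqrt (mu^2 + 2 * q * s2 + q^2 * h^2)) has_real_derivative 0) (at 0)"
    by (rule DERIV_cong[OF DERIV_chain2[OF sq X]]) simp
  show ?thesis
    by (rule DERIV_cong[OF DERIV_mult[OF DERIV_ident Q]]) simp
qed

lemma rpl_deriv0:
  fixes s2 mu q :: real
  assumes s2: "s2 > 0" and q: "q \<ge> 0" and nz: "max q \<bar>mu\<bar> > 0"
  shows "((\<lambda>h. rpl s2 mu q h) has_real_derivative alpha_plus s2 mu q) (at 0)"
proof -
  have A0: "mu^2 + 2 * q * s2 > 0" using S_facts[OF assms] by simp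
  have N: "((\<lambda>h. s2 + q*h^2 + h * sqrt (mu^2 + 2 * q * s2 + q^2 * h^2)) has_real_derivative sqrt (mu^2 + 2 * q * s2)) (at 0)"
    by (rule DERIV_cong[OF DERIV_add[OF DERIV_add[OF DERIV_const DERIV_cmult[OF DERIV_pow]] sqrt_deriv0[OF A0]]]) simp
  have Dn: "((\<lambda>h. s2 + mu*h) has_real_derivative mu) (at 0)"
    by (rule DERIV_cong[OF DERIV_add[OF DERIV_const DERIV_cmult[OF DERIV_ident]]]) simp
  have "((\<lambda>h. (s2 + q*h^2 + h * sqrt (mu^2 + 2 * q * s2 + q^2 * h^2)) / (s2 + mu*h)) has_real_derivative alpha_plus s2 mu q) (at 0)"
    by (rule DERIV_cong[OF DERIV_divide[OF N Dn]]) (use s2 in \<open>simp_all add: alpha_plus_def field_simps\<close>)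
  then show ?thesis unfolding rpl_def Shh_def .
qed

lemma rmi_deriv0:
  fixes s2 mu q :: real
  assumes s2: "s2 > 0" and q: "q \<ge> 0" and nz: "max q \<bar>mu\<bar> > 0"
  shows "((\<lambda>h. rmi s2 mu q h) has_real_derivative alpha_minus s2 mu q) (at 0)"
proof -
  have A0: "mu^2 + 2 * q * s2 > 0" using S_facts[OF assms] by simp
  have N: "((\<lambda>h. s2 + q*h^2 - h * sqrt (mu^2 + 2 * q * s2 + q^2 * h^2)) has_real_derivative - sqrt (mu^2 + 2 * q * s2)) (at 0)"
    by (rule DERIV_cong[OF DERIV_diff[OF DERIV_add[OF DERIV_const DERIV_cmult[OF DERIV_pow]] sqrt_deriv0[OF A0]]]) simp
  have Dn: "((\<lambda>h. s2 + mu*h) has_real_derivative mu) (at 0)"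
    by (rule DERIV_cong[OF DERIV_add[OF DERIV_const DERIV_cmult[OF DERIV_ident]]]) simp
  have "((\<lambda>h. (s2 + q*h^2 - h * sqrt (mu^2 + 2 * q * s2 + q^2 * h^2)) / (s2 + mu*h)) has_real_derivative alpha_minus s2 mu q) (at 0)"
    by (rule DERIV_cong[OF DERIV_divide[OF N Dn]]) (use s2 in \<open>simp_all add: alpha_minus_def field_simps\<close>)
  then show ?thesis unfolding rmi_def Shh_def .
qed

lemma ln_quot_lim:
  fixes r :: "real \<Rightarrow> real"
  assumes d: "(r has_real_derivative a) (at 0)" and r0: "r 0 = 1"
  shows "((\<lambda>h. ln (r h) / h) \<longlongrightarrow> a) (at_right 0)"
proof -
  have dl: "DERIV ln (r 0) :> inverse (r 0)" using r0 by (intro DERIV_ln) simp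
  have "((\<lambda>h. ln (r h)) has_real_derivative a) (at 0)"
    using DERIV_chain2[OF dl d] r0 by simp
  then have "((\<lambda>y. (ln (r y) - ln (r 0)) / (y - 0)) \<longlongrightarrow> a) (at 0)"
    by (simp add: has_field_derivative_iff)
  then have "((\<lambda>y. ln (r y) / y) \<longlongrightarrow> a) (at 0)" using r0 by simp
  then show ?thesis by (simp add: filterlim_at_split)
qed

lemma psi_at_root:
  fixes s2 mu q h :: real
  assumes s2: "s2 > 0" and q: "q \<ge> 0" and nz: "max q \<bar>mu\<bar> > 0" and h: "h > 0" and hm: "h * \<bar>mu\<bar> < s2"
  shows "psi_h s2 mu h (ln (rpl s2 mu q h) / h) = q" "psi_h s2 mu h (ln (rmi s2 mu q h) / h) = q"
proof -
  note G = gen_facts[OF assms]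
  have r0: "rpl s2 mu q h > 0" "rmi s2 mu q h > 0" using G by auto
  have e: "exp (ln (rpl s2 mu q h) / h * h) = rpl s2 mu q h" "exp (ln (rmi s2 mu q h) / h * h) = rmi s2 mu q h"
    using r0 h by auto
  show "psi_h s2 mu h (ln (rpl s2 mu q h) / h) = q"
    using psi_h_E[OF h, of s2 mu "ln (rpl s2 mu q h) / h" q] unfolding e G(7) by simp
  show "psi_h s2 mu h (ln (rmi s2 mu q h) / h) = q"
    using psi_h_E[OF h, of s2 mu "ln (rmi s2 mu q h) / h" q] unfolding e G(7) by simp
qed

lemma ev_good:
  fixes s2 mu :: real
  assumes s2: "s2 > 0"
  shows "\<forall>\<^sub>F h in at_right 0. 0 < h \<and> h * \<bar>mu\<bar> < s2"
proof -
  have "\<forall>\<^sub>F h in at_right 0. h \<in> {0<..<s2/(\<bar>mu\<bar>+1)}"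
    by (rule eventually_at_right_real) (use s2 in simp)
  then show ?thesis
  proof (rule eventually_mono)
    fix h :: real assume h: "h \<in> {0<..<s2/(\<bar>mu\<bar>+1)}"
    then have "h * (\<bar>mu\<bar>+1) < s2" by (simp add: field_simps)
    moreover have "h * \<bar>mu\<bar> \<le> h * (\<bar>mu\<bar>+1)" using h by simp
    moreover have "0 < h" using h by simp
    ultimately show "0 < h \<and> h * \<bar>mu\<bar> < s2" by linarith
  qed
qed

lemma up_lim:
  fixes s2 mu q :: real
  assumes s2: "s2 > 0" and q: "q \<ge> 0" and nz: "max q \<bar>mu\<bar> > 0"
  shows "((\<lambda>h. (ln (rpl s2 mu q h) / h - alpha_plus s2 mu q)/h^2) \<longlongrightarrow> - theta_plus s2 mu q) (at_right 0)"
proof -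
  define S where "S = sqrt (mu^2 + 2 * q * s2)"
  have SF: "S^2 = mu^2 + 2 * q * s2" "S > 0" using S_facts[OF assms] by (auto simp: S_def)
  have r0: "rpl s2 mu q 0 = 1" using s2 by (simp add: rpl_def)
  have Llim: "((\<lambda>h. ln (rpl s2 mu q h) / h) \<longlongrightarrow> alpha_plus s2 mu q) (at_right 0)"
    by (rule ln_quot_lim[OF rpl_deriv0[OF assms] r0])
  have ev: "\<forall>\<^sub>F h in at_right 0. psi_h s2 mu h (ln (rpl s2 mu q h) / h) = q"
    using ev_good[OF s2, of mu] by (rule eventually_mono) (use psi_at_root[OF assms] in auto)
  note AF = alpha_facts[OF assms]
  have nz': "s2 * alpha_plus s2 mu q + mu \<noteq> 0" using AF(3) SF by (simp add: S_def)
  have th: "theta_plus s2 mu q = (mu^3 * S + (q^2 * s2^2 / 2 - mu^4 - mu^2 * s2 * q)) / (3 * s2^3 * S)"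
    unfolding theta_plus_def S_def by (simp add: add.commute)
  have ap: "alpha_plus s2 mu q = (-mu + S)/s2" by (simp add: alpha_plus_def S_def)
  show ?thesis
    using root_limit[OF Llim ev AF(1) nz'] theta_alg(1)[OF SF(1) SF(2) s2] unfolding th ap by simp
qed

lemma um_lim:
  fixes s2 mu q :: real
  assumes s2: "s2 > 0" and q: "q \<ge> 0" and nz: "max q \<bar>mu\<bar> > 0"
  shows "((\<lambda>h. (ln (rmi s2 mu q h) / h - alpha_minus s2 mu q)/h^2) \<longlongrightarrow> - theta_minus s2 mu q) (at_right 0)"
proof -
  define S where "S = sqrt (mu^2 + 2 * q * s2)"
  have SF: "S^2 = mu^2 + 2 * q * s2" "S > 0" using S_facts[OF assms] by (auto simp: S_def)
  have r0: "rmi s2 mu q 0 = 1" using s2 by (simp add: rmi_def)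
  have Llim: "((\<lambda>h. ln (rmi s2 mu q h) / h) \<longlongrightarrow> alpha_minus s2 mu q) (at_right 0)"
    by (rule ln_quot_lim[OF rmi_deriv0[OF assms] r0])
  have ev: "\<forall>\<^sub>F h in at_right 0. psi_h s2 mu h (ln (rmi s2 mu q h) / h) = q"
    using ev_good[OF s2, of mu] by (rule eventually_mono) (use psi_at_root[OF assms] in auto)
  note AF = alpha_facts[OF assms]
  have nz': "s2 * alpha_minus s2 mu q + mu \<noteq> 0" using AF(4) SF by (simp add: S_def)
  have th: "theta_minus s2 mu q = (mu^3 * S - (q^2 * s2^2 / 2 - mu^4 - mu^2 * s2 * q)) / (3 * s2^3 * S)"
    unfolding theta_minus_def S_def by (simp add: add.commute)
  have am: "alpha_minus s2 mu q = (-mu - S)/s2" by (simp add: alpha_minus_def S_def)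
  show ?thesis
    using root_limit[OF Llim ev AF(2) nz'] theta_alg(2)[OF SF(1) SF(2) s2] unfolding th am by simp
qed

lemma sh_lim:
  fixes s2 mu q :: real
  assumes s2: "s2 > 0" and q: "q \<ge> 0" and nz: "max q \<bar>mu\<bar> > 0"
  shows "((\<lambda>h. (1/sqrt (mu^2 + 2 * q * s2) - 1/Shh s2 mu q h)/h^2) \<longlongrightarrow> q^2/(2* sqrt (mu^2 + 2 * q * s2)^3)) (at_right 0)"
proof -
  define S where "S = sqrt (mu^2 + 2 * q * s2)"
  have SF: "S^2 = mu^2 + 2 * q * s2" "S > 0" using S_facts[OF assms] by (auto simp: S_def)
  have Shl: "((\<lambda>h. Shh s2 mu q h) \<longlongrightarrow> S) (at_right 0)"
  proof -
    have "((\<lambda>h::real. sqrt (mu^2 + 2 * q * s2 + q^2 * h^2)) \<longlongrightarrow> sqrt (mu^2 + 2 * q * s2 + q^2 * 0^2)) (at_right 0)"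
      by (intro tendsto_intros)
    then show ?thesis by (simp add: Shh_def S_def)
  qed
  have lim: "((\<lambda>h. q^2 / (S * Shh s2 mu q h * (Shh s2 mu q h + S))) \<longlongrightarrow> q^2 / (S * S * (S + S))) (at_right 0)"
    by (intro tendsto_intros Shl) (use SF in auto)
  have ev: "\<forall>\<^sub>F h in at_right 0. q^2 / (S * Shh s2 mu q h * (Shh s2 mu q h + S)) = (1/S - 1/Shh s2 mu q h)/h^2"
    using eventually_at_right_less[of "0::real"]
  proof (rule eventually_mono)
    fix h :: real assume h: "0 < h"
    define T where "T = Shh s2 mu q h"
    have nn: "0 \<le> mu^2 + 2 * q * s2 + q^2*h^2" using SF(1) zero_le_power2[of S] zero_le_power2[of "q*h"] by (simp add: power_mult_distrib)
    have T2: "T^2 = S^2 + q^2*h^2" using nn by (simp add: Shh_def T_def SF(1))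
    have Tn: "T \<ge> 0" using nn by (simp add: T_def Shh_def)
    have "T \<noteq> 0"
    proof
      assume "T = 0"
      then have "S^2 + q^2*h^2 = 0" using T2 by simp
      moreover have "S^2 > 0" using SF(2) by simp
      moreover have "q^2*h^2 \<ge> 0" by simp
      ultimately show False by linarith
    qed
    then have T0: "T > 0" using Tn by simp
    have TS: "T + S > 0" using T0 SF(2) by simp
    have a1: "(1/S - 1/T)/h^2 = (T - S)/(S*T*h^2)"
      using SF(2) T0 h by (simp add: field_simps)
    have a2: "(T^2 - S^2)/(S*T*(T+S)*h^2) = ((T - S)*(T+S))/((S*T*h^2)*(T+S))"
      by (simp add: power2_eq_square algebra_simps)
    have a3: "((T - S)*(T+S))/((S*T*h^2)*(T+S)) = (T - S)/(S*T*h^2)"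
      using TS by simp
    have "(1/S - 1/T)/h^2 = (T^2 - S^2)/(S*T*(T+S)*h^2)"
      unfolding a1 a2 a3 ..
    also have "\<dots> = q^2 / (S * T * (T + S))" unfolding T2 using h by simp
    finally show "q^2 / (S * Shh s2 mu q h * (Shh s2 mu q h + S)) = (1/S - 1/Shh s2 mu q h)/h^2"
      by (simp add: T_def)
  qed
  have e: "q^2 / (S * S * (S + S)) = q^2/(2*S^3)" by (simp add: power3_eq_cube)
  have "((\<lambda>h. (1/S - 1/Shh s2 mu q h)/h^2) \<longlongrightarrow> q^2/(2*S^3)) (at_right 0)"
    using tendsto_cong[OF ev] lim unfolding e by simp
  then show ?thesis unfolding S_def .
qed

lemma exp_expand:
  fixes x L a h :: real
  assumes h: "h \<noteq> 0"
  shows "exp (x * L) = exp (a * x) * (1 + x * h^2 * ((L - a)/h^2) * E1f (x * h^2 * ((L - a)/h^2)))"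
proof -
  have t: "x * h^2 * ((L - a)/h^2) = x * (L - a)" using h by simp
  have "exp (x * L) = exp (a * x) * exp (x * (L - a))"
    unfolding mult_exp_exp by (simp add: algebra_simps)
  also have "exp (x * (L - a)) = 1 + x * (L - a) * E1f (x * (L - a))"
    using E1f_id[of "x * (L - a)"] by simp
  finally show ?thesis unfolding t .
qed

lemma pow_as_exp:
  fixes r h :: real and k :: nat
  assumes "r > 0" "h \<noteq> 0"
  shows "r ^ k = exp ((real k * h) * (ln r / h))"
proof -
  have "(real k * h) * (ln r / h) = real k * ln r" using assms by simp
  then show ?thesis using assms by (simp add: exp_of_nat_mult)
qed

definition upf :: "real \<Rightarrow> real \<Rightarrow> real \<Rightarrow> real \<Rightarrow> real" where
  "upf s2 mu q h = (ln (rpl s2 mu q h) / h - alpha_plus s2 mu q)/h^2"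
definition umf :: "real \<Rightarrow> real \<Rightarrow> real \<Rightarrow> real \<Rightarrow> real" where
  "umf s2 mu q h = (ln (rmi s2 mu q h) / h - alpha_minus s2 mu q)/h^2"
definition Gf :: "real \<Rightarrow> real \<Rightarrow> real \<Rightarrow> real \<Rightarrow> real \<Rightarrow> real" where
  "Gf s2 mu q x h = (1/sqrt (mu^2 + 2 * q * s2) - 1/Shh s2 mu q h)/h^2 * (exp (alpha_plus s2 mu q * x) - exp (alpha_minus s2 mu q * x))
     + (1/Shh s2 mu q h) * (exp (alpha_minus s2 mu q * x) * x * umf s2 mu q h * E1f (x * h^2 * umf s2 mu q h)
                          - exp (alpha_plus s2 mu q * x) * x * upf s2 mu q h * E1f (x * h^2 * upf s2 mu q h))"

lemma G_alg:
  fixes P M A B S T h :: real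
  assumes "h \<noteq> 0" "S \<noteq> 0" "T \<noteq> 0"
  shows "((P - M)/S - (P * (1 + h^2 * A) - M * (1 + h^2 * B))/T)/h^2 = (1/S - 1/T)/h^2 * (P - M) + (1/T) * (M * B - P * A)"
  using assms by (simp add: field_simps power2_eq_square)

lemma W_gen_form:
  fixes s2 mu q x :: real
  assumes nz: "max q \<bar>mu\<bar> > 0" and x: "x \<ge> 0"
  shows "W s2 mu q x = (exp (alpha_plus s2 mu q * x) - exp (alpha_minus s2 mu q * x)) / sqrt (mu^2 + 2 * q * s2)"
proof -
  have "mu^2 + 2 * s2 * q = mu^2 + 2 * q * s2" by simp
  then show ?thesis using nz x unfolding W_def by (simp add: not_less)
qed

lemma Delta_G:
  fixes s2 mu q h :: real
  assumes s2: "s2 > 0" and q: "q \<ge> 0" and nz: "max q \<bar>mu\<bar> > 0" and h: "h > 0" and hm: "h * \<bar>mu\<bar> < s2"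
    and k: "k \<ge> 1"
  shows "Delta_W s2 mu q (real k * h) h / h^2 = Gf s2 mu q (real k * h) h"
proof -
  note G = gen_facts[OF s2 q nz h hm]
  define x where "x = real k * h"
  have x0: "x \<ge> 0" using h by (simp add: x_def)
  define S where "S = sqrt (mu^2 + 2 * q * s2)"
  have S0: "S > 0" using S_facts[OF s2 q nz] by (simp add: S_def)
  have hn: "h \<noteq> 0" using h by simp
  have rpp: "rpl s2 mu q h ^ k = exp (x * (ln (rpl s2 mu q h) / h))"
    unfolding x_def by (rule pow_as_exp) (use G hn in auto)
  have rpe: "exp (x * (ln (rpl s2 mu q h) / h)) = exp (alpha_plus s2 mu q * x) * (1 + x * h^2 * upf s2 mu q h * E1f (x * h^2 * upf s2 mu q h))"
    unfolding upf_def by (rule exp_expand[OF hn])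
  have rp: "rpl s2 mu q h ^ k = exp (alpha_plus s2 mu q * x) * (1 + h^2 * (x * upf s2 mu q h * E1f (x * h^2 * upf s2 mu q h)))"
    unfolding rpp rpe by (simp add: mult_ac)
  have rmp: "rmi s2 mu q h ^ k = exp (x * (ln (rmi s2 mu q h) / h))"
    unfolding x_def by (rule pow_as_exp) (use G hn in auto)
  have rme: "exp (x * (ln (rmi s2 mu q h) / h)) = exp (alpha_minus s2 mu q * x) * (1 + x * h^2 * umf s2 mu q h * E1f (x * h^2 * umf s2 mu q h))"
    unfolding umf_def by (rule exp_expand[OF hn])
  have rm: "rmi s2 mu q h ^ k = exp (alpha_minus s2 mu q * x) * (1 + h^2 * (x * umf s2 mu q h * E1f (x * h^2 * umf s2 mu q h)))"
    unfolding rmp rme by (simp add: mult_ac)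
  have "Delta_W s2 mu q x h / h^2 = ((exp (alpha_plus s2 mu q * x) - exp (alpha_minus s2 mu q * x)) / S
      - (rpl s2 mu q h ^ k - rmi s2 mu q h ^ k) / Shh s2 mu q h) / h^2"
    using Delta_gen[OF s2 q nz h hm k] W_gen_form[OF nz x0] unfolding x_def S_def by simp
  also have "\<dots> = Gf s2 mu q x h"
    unfolding rp rm Gf_def S_def[symmetric]
    using G_alg[OF hn, of S "Shh s2 mu q h" "exp (alpha_plus s2 mu q * x)" "exp (alpha_minus s2 mu q * x)"
       "x * upf s2 mu q h * E1f (x * h^2 * upf s2 mu q h)" "x * umf s2 mu q h * E1f (x * h^2 * umf s2 mu q h)"] S0 G(1)
    by (simp add: mult.assoc)
  finally show ?thesis unfolding x_def .
qed

lemma G_lim: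
  fixes s2 mu q x :: real
  assumes s2: "s2 > 0" and q: "q \<ge> 0" and nz: "max q \<bar>mu\<bar> > 0"
  shows "((\<lambda>h. Gf s2 mu q x h) \<longlongrightarrow>
      q^2/(2* sqrt (mu^2 + 2 * q * s2)^3) * (exp (alpha_plus s2 mu q * x) - exp (alpha_minus s2 mu q * x))
      + (1/sqrt (mu^2 + 2 * q * s2)) * (exp (alpha_minus s2 mu q * x) * x * (- theta_minus s2 mu q) * 1
                          - exp (alpha_plus s2 mu q * x) * x * (- theta_plus s2 mu q) * 1)) (at_right 0)"
proof -
  define S where "S = sqrt (mu^2 + 2 * q * s2)"
  have S0: "S > 0" using S_facts[OF s2 q nz] by (simp add: S_def)
  have Shl: "((\<lambda>h. Shh s2 mu q h) \<longlongrightarrow> S) (at_right 0)"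
  proof -
    have "((\<lambda>h::real. sqrt (mu^2 + 2 * q * s2 + q^2 * h^2)) \<longlongrightarrow> sqrt (mu^2 + 2 * q * s2 + q^2 * 0^2)) (at_right 0)"
      by (intro tendsto_intros)
    then show ?thesis by (simp add: Shh_def S_def)
  qed
  have up: "((\<lambda>h. upf s2 mu q h) \<longlongrightarrow> - theta_plus s2 mu q) (at_right 0)"
    using up_lim[OF assms] unfolding upf_def .
  have um: "((\<lambda>h. umf s2 mu q h) \<longlongrightarrow> - theta_minus s2 mu q) (at_right 0)"
    using um_lim[OF assms] unfolding umf_def .
  have h2: "((\<lambda>h::real. h^2) \<longlongrightarrow> 0) (at_right 0)"
    using tendsto_power[OF tendsto_ident_at[of "0::real" "{0<..}"], of 2] by simp
  have Ep: "((\<lambda>h. E1f (x * h^2 * upf s2 mu q h)) \<longlongrightarrow> 1) (at_right 0)"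
  proof -
    have "((\<lambda>h. x * h^2 * upf s2 mu q h) \<longlongrightarrow> x * 0 * (- theta_plus s2 mu q)) (at_right 0)"
      by (intro tendsto_intros h2 up)
    then have "((\<lambda>h. x * h^2 * upf s2 mu q h) \<longlongrightarrow> 0) (at_right 0)" by simp
    from isCont_tendsto_compose[OF isCont_E1f this] show ?thesis by (simp add: E1f_def[of 0])
  qed
  have Em: "((\<lambda>h. E1f (x * h^2 * umf s2 mu q h)) \<longlongrightarrow> 1) (at_right 0)"
  proof -
    have "((\<lambda>h. x * h^2 * umf s2 mu q h) \<longlongrightarrow> x * 0 * (- theta_minus s2 mu q)) (at_right 0)"
      by (intro tendsto_intros h2 um)
    then have "((\<lambda>h. x * h^2 * umf s2 mu q h) \<longlongrightarrow> 0) (at_right 0)" by simp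
    from isCont_tendsto_compose[OF isCont_E1f this] show ?thesis by (simp add: E1f_def[of 0])
  qed
  have sh: "((\<lambda>h. (1/S - 1/Shh s2 mu q h)/h^2) \<longlongrightarrow> q^2/(2*S^3)) (at_right 0)"
    using sh_lim[OF assms] unfolding S_def .
  show ?thesis unfolding Gf_def S_def[symmetric]
    by (intro tendsto_intros sh Shl up um Ep Em) (use S0 in simp)
qed

lemma Zpp_nested:
  fixes hs :: "nat \<Rightarrow> real"
  assumes pos: "\<And>n. hs n > 0" and nat: "\<And>n. hs n / hs (Suc n) \<in> \<nat>" and x: "x \<in> Zpp (hs m)"
  shows "n \<ge> m \<Longrightarrow> x \<in> Zpp (hs n)"
proof (induction n rule: dec_induct)
  case base then show ?case using x .
next
  case (step n)
  obtain j :: int where j: "x = real_of_int j * hs n" "x > 0" using step.IH unfolding Zpp_def by auto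
  obtain N :: nat where N: "hs n / hs (Suc n) = real N" using nat[of n] by (auto elim: Nats_cases)
  have "hs n = real N * hs (Suc n)" using N pos[of "Suc n"] by (simp add: field_simps)
  then have "x = real_of_int (j * int N) * hs (Suc n)" using j by simp
  then show ?case using j unfolding Zpp_def by blast
qed

lemma limit_value:
  fixes s2 mu q x :: real
  assumes s2: "s2 > 0" and q: "q \<ge> 0" and nz: "max q \<bar>mu\<bar> > 0" and x: "x \<ge> 0"
  shows "q^2/(2 * sqrt (mu^2 + 2 * q * s2)^3) * (exp (alpha_plus s2 mu q * x) - exp (alpha_minus s2 mu q * x))
      + (1/sqrt (mu^2 + 2 * q * s2)) * (exp (alpha_minus s2 mu q * x) * x * (- theta_minus s2 mu q) * 1
                          - exp (alpha_plus s2 mu q * x) * x * (- theta_plus s2 mu q) * 1)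
    = q^2 / (2 * (mu^2 + 2 * s2 * q)) * W s2 mu q x
               + x / sqrt (mu^2 + 2 * s2 * q)
                 * (exp (alpha_plus s2 mu q * x) * theta_plus s2 mu q
                    - exp (alpha_minus s2 mu q * x) * theta_minus s2 mu q)"
proof -
  define S where "S = sqrt (mu^2 + 2 * q * s2)"
  have SF: "S^2 = mu^2 + 2 * q * s2" "S > 0" using S_facts[OF s2 q nz] by (auto simp: S_def)
  have c: "mu^2 + 2 * s2 * q = mu^2 + 2 * q * s2" by simp
  have S3: "S^3 = S * (mu^2 + 2 * q * s2)" using SF(1) by (simp add: power3_eq_cube power2_eq_square)
  show ?thesis unfolding W_gen_form[OF nz x] c S_def[symmetric] S3 SF(1)[symmetric]
    using SF(2) by (simp add: field_simps power2_eq_square power3_eq_cube)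
qed

lemma q0_value:
  fixes s2 mu x :: real
  assumes s2: "s2 > 0" and mu: "mu \<noteq> 0"
  shows "(0::real)^2 / (2 * (mu^2 + 2 * s2 * 0)) * W s2 mu 0 x
               + x / sqrt (mu^2 + 2 * s2 * 0)
                 * (exp (alpha_plus s2 mu 0 * x) * theta_plus s2 mu 0
                    - exp (alpha_minus s2 mu 0 * x) * theta_minus s2 mu 0)
       = - (2/3) * mu^2 * x / s2^3 * exp (- 2 * mu * x / s2)"
proof (cases "mu > 0")
  case True
  have sq: "sqrt (mu^2) = mu" using True by simp
  have ap: "alpha_plus s2 mu 0 = 0" unfolding alpha_plus_def using sq by simp
  have am: "alpha_minus s2 mu 0 * x = - 2 * mu * x / s2" unfolding alpha_minus_def using sq by simp
  have tp: "theta_plus s2 mu 0 = 0" unfolding theta_plus_def using sq by (simp add: power4_eq_xxxx power3_eq_cube)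
  have tm: "theta_minus s2 mu 0 = 2 * mu^3 / (3 * s2^3)" unfolding theta_minus_def using sq True s2
    by (simp add: power4_eq_xxxx power3_eq_cube field_simps)
  show ?thesis unfolding ap am tp tm using sq True s2 by (simp add: field_simps power3_eq_cube power2_eq_square)
next
  case False
  then have neg: "mu < 0" using mu by simp
  have sq: "sqrt (mu^2) = - mu" using neg by simp
  have ap: "alpha_plus s2 mu 0 * x = - 2 * mu * x / s2" unfolding alpha_plus_def using sq by simp
  have am: "alpha_minus s2 mu 0 = 0" unfolding alpha_minus_def using sq by simp
  have tm: "theta_minus s2 mu 0 = 0" unfolding theta_minus_def using sq by (simp add: power4_eq_xxxx power3_eq_cube)
  have tp: "theta_plus s2 mu 0 = 2 * mu^3 / (3 * s2^3)" unfolding theta_plus_def using sq neg s2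
    by (simp add: power4_eq_xxxx power3_eq_cube field_simps)
  show ?thesis unfolding ap am tp tm using sq neg s2 by (simp add: field_simps power3_eq_cube power2_eq_square)
qed

lemma part_ii:
  fixes s2 mu q x :: real and hs :: "nat \<Rightarrow> real"
  assumes s2: "s2 > 0" and q: "q \<ge> 0" and nz: "max q \<bar>mu\<bar> > 0"
    and pos: "\<And>n. hs n > 0" and lim: "hs \<longlonglongrightarrow> 0" and nat: "\<And>n. hs n / hs (Suc n) \<in> \<nat>"
    and x: "x \<in> (\<Union>n. Zpp (hs n))"
  shows "((\<lambda>n. Delta_W s2 mu q x (hs n) / (hs n)^2) \<longlonglongrightarrow>
               q^2 / (2 * (mu^2 + 2 * s2 * q)) * W s2 mu q x
               + x / sqrt (mu^2 + 2 * s2 * q)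
                 * (exp (alpha_plus s2 mu q * x) * theta_plus s2 mu q
                    - exp (alpha_minus s2 mu q * x) * theta_minus s2 mu q))"
proof -
  obtain m where xm: "x \<in> Zpp (hs m)" using x by blast
  have x0: "x > 0" using xm unfolding Zpp_def by auto
  have filt: "filterlim hs (at_right 0) sequentially"
    by (rule tendsto_imp_filterlim_at_right[OF lim]) (use pos in simp)
  have GL: "((\<lambda>n. Gf s2 mu q x (hs n)) \<longlonglongrightarrow>
      q^2/(2 * sqrt (mu^2 + 2 * q * s2)^3) * (exp (alpha_plus s2 mu q * x) - exp (alpha_minus s2 mu q * x))
      + (1/sqrt (mu^2 + 2 * q * s2)) * (exp (alpha_minus s2 mu q * x) * x * (- theta_minus s2 mu q) * 1
                          - exp (alpha_plus s2 mu q * x) * x * (- theta_plus s2 mu q) * 1))"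
    by (rule filterlim_compose[OF G_lim[OF s2 q nz] filt])
  have evg: "\<forall>\<^sub>F n in sequentially. 0 < hs n \<and> hs n * \<bar>mu\<bar> < s2"
    by (rule eventually_compose_filterlim[OF ev_good[OF s2] filt])
  have ev: "\<forall>\<^sub>F n in sequentially. Gf s2 mu q x (hs n) = Delta_W s2 mu q x (hs n) / (hs n)^2"
    using evg eventually_ge_at_top[of m]
  proof eventually_elim
    case (elim n)
    have "x \<in> Zpp (hs n)" using Zpp_nested[OF pos nat xm elim(2)] .
    then obtain k :: nat where k: "k \<ge> 1" "x = real k * hs n" using Zpp_nat[OF pos[of n]] by blast
    show ?case using Delta_G[OF s2 q nz _ _ k(1)] elim(1) unfolding k(2) by simp
  qed
  show ?thesis using tendsto_cong[OF ev] GL unfolding limit_value[OF s2 q nz less_imp_le[OF x0]] by simp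
qed

lemma abs_E1f: "\<bar>E1f t\<bar> \<le> exp \<bar>t\<bar>"
proof (cases "t = 0")
  case True then show ?thesis by (simp add: E1f_def)
next
  case False
  show ?thesis
  proof (cases "t > 0")
    case True
    have a: "exp (-t) \<ge> 1 - t" using exp_ge_add_one_self[of "-t"] by simp
    have "exp t * exp (-t) = 1" by (simp add: exp_minus)
    then have "1 \<ge> exp t * (1 - t)" using a by (metis exp_gt_zero mult_left_mono order_less_imp_le)
    then have b: "exp t - 1 \<le> t * exp t" by (simp add: algebra_simps)
    have c: "exp t - 1 \<ge> 0" using True by simp
    have "E1f t = (exp t - 1)/t" using False by (simp add: E1f_def)
    moreover have "(exp t - 1)/t \<le> exp t" using b True by (simp add: divide_le_eq mult.commute)
    moreover have "(exp t - 1)/t \<ge> 0" using c True by simp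
    ultimately show ?thesis using True by simp
  next
    case neg: False
    then have tn: "t < 0" using False by simp
    have a: "exp t \<ge> 1 + t" by (rule exp_ge_add_one_self)
    have b: "1 - exp t \<le> - t" using a by linarith
    have c: "1 - exp t \<ge> 0" using tn by simp
    define u where "u = -t"
    have u0: "u > 0" using tn by (simp add: u_def)
    have bu: "1 - exp t \<le> u" using b by (simp add: u_def)
    have "E1f t = (1 - exp t)/u" using False by (simp add: E1f_def field_simps u_def)
    moreover have "(1 - exp t)/u \<le> 1" using bu u0 by (simp add: divide_le_eq_1_pos)
    moreover have "(1 - exp t)/u \<ge> 0" using c u0 by simp
    ultimately have "\<bar>E1f t\<bar> \<le> 1" by (metis abs_of_nonneg)
    moreover have "1 \<le> exp \<bar>t\<bar>" by simp
    ultimately show ?thesis by linarith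
  qed
qed

lemma bound_alg:
  fixes g up um x h S T M P K :: real
  assumes g: "\<bar>g\<bar> \<le> K" and up: "\<bar>up\<bar> \<le> K" and um: "\<bar>um\<bar> \<le> K" and x: "0 \<le> x" and xh: "x * h^2 \<le> 1"
    and S: "0 < S" "S \<le> T" and MP: "0 \<le> M" "M \<le> P"
  shows "\<bar>g * (P - M) + (1/T) * (M * x * um * E1f (x * h^2 * um) - P * x * up * E1f (x * h^2 * up))\<bar>
    \<le> (2*K + 2*K*exp K/S) * (1 + x) * P"
proof -
  have K0: "K \<ge> 0" using g by linarith
  have P0: "P \<ge> 0" using MP by linarith
  have eb: "\<bar>E1f (x * h^2 * u)\<bar> \<le> exp K" if u: "\<bar>u\<bar> \<le> K" for u
  proof -
    have "\<bar>x * h^2 * u\<bar> = (x * h^2) * \<bar>u\<bar>" using x by (simp add: abs_mult)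
    also have "\<dots> \<le> 1 * K" using xh u x by (intro mult_mono) auto
    finally have "\<bar>x * h^2 * u\<bar> \<le> K" by simp
    then show ?thesis using abs_E1f[of "x * h^2 * u"] by (meson exp_le_cancel_iff order_trans)
  qed
  have t: "\<bar>Q * x * u * E1f (x * h^2 * u)\<bar> \<le> P * x * (K * exp K)" if Q: "0 \<le> Q" "Q \<le> P" and u: "\<bar>u\<bar> \<le> K" for Q u
  proof -
    have "\<bar>Q * x * u * E1f (x * h^2 * u)\<bar> = (Q * x) * (\<bar>u\<bar> * \<bar>E1f (x * h^2 * u)\<bar>)"
      using Q x by (simp add: abs_mult)
    also have "\<dots> \<le> (P * x) * (K * exp K)"
      using Q x u eb[OF u] by (intro mult_mono) auto
    finally show ?thesis by simp
  qed
  have t1: "\<bar>g * (P - M)\<bar> \<le> K * P" using g MP by (simp add: abs_mult) (intro mult_mono, auto)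
  have T0: "T > 0" using S by linarith
  have iT: "1/T \<le> 1/S" using S by (simp add: frac_le)
  have inner: "\<bar>M * x * um * E1f (x * h^2 * um) - P * x * up * E1f (x * h^2 * up)\<bar> \<le> 2 * (P * x * (K * exp K))"
    using t[OF MP um] t[OF P0 order_refl up] by linarith
  have t2: "\<bar>(1/T) * (M * x * um * E1f (x * h^2 * um) - P * x * up * E1f (x * h^2 * up))\<bar> \<le> (1/S) * (2 * (P * x * (K * exp K)))"
  proof -
    have "\<bar>(1/T) * (M * x * um * E1f (x * h^2 * um) - P * x * up * E1f (x * h^2 * up))\<bar>
       = (1/T) * \<bar>M * x * um * E1f (x * h^2 * um) - P * x * up * E1f (x * h^2 * up)\<bar>"
      using T0 by (simp add: abs_mult)
    also have "\<dots> \<le> (1/S) * (2 * (P * x * (K * exp K)))"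
      by (rule mult_mono[OF iT inner]) (use S in auto)
    finally show ?thesis .
  qed
  have "\<bar>g * (P - M) + (1/T) * (M * x * um * E1f (x * h^2 * um) - P * x * up * E1f (x * h^2 * up))\<bar>
      \<le> K * P + (1/S) * (2 * (P * x * (K * exp K)))" using t1 t2 by linarith
  also have "\<dots> \<le> (2*K + 2*K*exp K/S) * (1 + x) * P"
  proof -
    have "K * P \<le> 2 * K * (1 + x) * P" using K0 P0 x by (simp add: mult_right_mono algebra_simps)
    moreover have "(1/S) * (2 * (P * x * (K * exp K))) \<le> 2*K*exp K/S * (1 + x) * P"
    proof -
      have "(1/S) * (2 * (P * x * (K * exp K))) = 2*K*exp K/S * x * P" by (simp add: field_simps)
      also have "\<dots> \<le> 2*K*exp K/S * (1 + x) * P"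
        using K0 P0 S by (intro mult_right_mono mult_left_mono) auto
      finally show ?thesis .
    qed
    ultimately show ?thesis by (simp add: algebra_simps)
  qed
  finally show ?thesis .
qed

lemma ev_abs_bound:
  fixes f :: "real \<Rightarrow> real"
  assumes "(f \<longlongrightarrow> l) F"
  shows "\<forall>\<^sub>F h in F. \<bar>f h\<bar> \<le> \<bar>l\<bar> + 1"
proof -
  have "((\<lambda>h. \<bar>f h\<bar>) \<longlongrightarrow> \<bar>l\<bar>) F" by (rule tendsto_rabs[OF assms])
  from order_tendstoD(2)[OF this, of "\<bar>l\<bar> + 1"] show ?thesis
    by (rule eventually_mono) simp_all
qed

lemma part_i:
  fixes s2 mu q :: real
  assumes s2: "s2 > 0" and q: "q \<ge> 0" and nz: "max q \<bar>mu\<bar> > 0"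
  shows "\<exists>A0>0. \<exists>h0>0. \<forall>h. 0 < h \<and> h < h0 \<longrightarrow>
          (\<forall>x\<in>Zpp h. x * h^2 \<le> 1 \<longrightarrow>
             \<bar>Delta_W s2 mu q x h\<bar> \<le> A0 * h^2 * (1 + x) * exp (alpha_plus s2 mu q * x))"
proof -
  define S where "S = sqrt (mu^2 + 2 * q * s2)"
  have S0: "S > 0" using S_facts[OF s2 q nz] by (simp add: S_def)
  define K where "K = max (max (\<bar>- theta_plus s2 mu q\<bar> + 1) (\<bar>- theta_minus s2 mu q\<bar> + 1)) (\<bar>q^2/(2*S^3)\<bar> + 1)"
  have "K \<ge> \<bar>q^2/(2*S^3)\<bar> + 1" unfolding K_def by (rule max.cobounded2)
  then have K0: "K > 0" using abs_ge_zero[of "q^2/(2*S^3)"] by linarith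
  define A0 where "A0 = 2*K + 2*K*exp K/S"
  have A0: "A0 > 0" using K0 S0 by (simp add: A0_def add_pos_pos)
  have e1: "\<forall>\<^sub>F h in at_right 0. \<bar>upf s2 mu q h\<bar> \<le> K"
    using ev_abs_bound[OF up_lim[OF assms, folded upf_def]] by (rule eventually_mono) (simp add: K_def)
  have e2: "\<forall>\<^sub>F h in at_right 0. \<bar>umf s2 mu q h\<bar> \<le> K"
    using ev_abs_bound[OF um_lim[OF assms, folded umf_def]] by (rule eventually_mono) (simp add: K_def)
  have e3: "\<forall>\<^sub>F h in at_right 0. \<bar>(1/S - 1/Shh s2 mu q h)/h^2\<bar> \<le> K"
    using ev_abs_bound[OF sh_lim[OF assms, folded S_def]] by (rule eventually_mono) (simp add: K_def)
  have "\<forall>\<^sub>F h in at_right 0. (0 < h \<and> h * \<bar>mu\<bar> < s2) \<and> \<bar>upf s2 mu q h\<bar> \<le> K \<and> \<bar>umf s2 mu q h\<bar> \<le> K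
      \<and> \<bar>(1/S - 1/Shh s2 mu q h)/h^2\<bar> \<le> K"
    using ev_good[OF s2, of mu] e1 e2 e3 by eventually_elim auto
  then obtain b :: real where b: "b > 0" and bP: "\<And>h. h > 0 \<Longrightarrow> h < b \<Longrightarrow> (0 < h \<and> h * \<bar>mu\<bar> < s2) \<and> \<bar>upf s2 mu q h\<bar> \<le> K \<and> \<bar>umf s2 mu q h\<bar> \<le> K
      \<and> \<bar>(1/S - 1/Shh s2 mu q h)/h^2\<bar> \<le> K"
    using eventually_at_right[of "0::real" 1] by auto
  have "\<forall>h. 0 < h \<and> h < b \<longrightarrow>
          (\<forall>x\<in>Zpp h. x * h^2 \<le> 1 \<longrightarrow>
             \<bar>Delta_W s2 mu q x h\<bar> \<le> A0 * h^2 * (1 + x) * exp (alpha_plus s2 mu q * x))"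
  proof (intro allI impI ballI)
    fix h x assume hb: "0 < h \<and> h < b" and xz: "x \<in> Zpp h" and xh: "x * h^2 \<le> 1"
    note P = bP[OF conjunct1[OF hb] conjunct2[OF hb]]
    obtain k :: nat where k: "k \<ge> 1" "x = real k * h" using Zpp_nat[OF conjunct1[OF hb] xz] by blast
    have x0: "x \<ge> 0" using k hb by simp
    have D: "Delta_W s2 mu q x h = h^2 * Gf s2 mu q x h"
      using Delta_G[OF s2 q nz _ _ k(1), of h] P hb unfolding k(2)[symmetric] by (simp add: field_simps)
    have ST: "S \<le> Shh s2 mu q h" unfolding S_def Shh_def by (rule real_sqrt_le_mono) simp
    have MP: "exp (alpha_minus s2 mu q * x) \<le> exp (alpha_plus s2 mu q * x)"
      using alpha_facts(5)[OF assms] x0 by (simp add: mult_right_mono)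
    have "\<bar>Gf s2 mu q x h\<bar> \<le> A0 * (1 + x) * exp (alpha_plus s2 mu q * x)"
      unfolding Gf_def S_def[symmetric] A0_def
      by (rule bound_alg) (use P x0 xh S0 ST MP in auto)
    then have "h^2 * \<bar>Gf s2 mu q x h\<bar> \<le> h^2 * (A0 * (1 + x) * exp (alpha_plus s2 mu q * x))"
      by (rule mult_left_mono) simp
    then show "\<bar>Delta_W s2 mu q x h\<bar> \<le> A0 * h^2 * (1 + x) * exp (alpha_plus s2 mu q * x)"
      unfolding D by (simp add: abs_mult mult_ac)
  qed
  then show ?thesis using A0 b by blast
qed

theorem proposition5p5:
  fixes s2 mu q :: real
  assumes s2: "s2 > 0" and q: "q \<ge> 0"
  shows
   "(q = 0 \<and> mu = 0 \<longrightarrow>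
       (\<forall>h>0. \<forall>x\<in>Zpp h. Delta_W s2 mu q x h = 0))
    \<and>
    (max q \<bar>mu\<bar> > 0 \<longrightarrow>
       (\<exists>A0>0. \<exists>h0>0. \<forall>h. 0 < h \<and> h < h0 \<longrightarrow>
          (\<forall>x\<in>Zpp h. x * h^2 \<le> 1 \<longrightarrow>
             \<bar>Delta_W s2 mu q x h\<bar> \<le> A0 * h^2 * (1 + x) * exp (alpha_plus s2 mu q * x)))
       \<and>
       (\<forall>hs :: nat \<Rightarrow> real. \<forall>x.
          (\<forall>n. hs n > 0) \<and> decseq hs \<and> hs \<longlonglongrightarrow> 0 \<and>
          (\<forall>n. hs n / hs (Suc n) \<in> \<nat>) \<and> x \<in> (\<Union>n. Zpp (hs n)) \<longrightarrow>
            ((\<lambda>n. Delta_W s2 mu q x (hs n) / (hs n)^2) \<longlonglongrightarrow>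
               q^2 / (2 * (mu^2 + 2 * s2 * q)) * W s2 mu q x
               + x / sqrt (mu^2 + 2 * s2 * q)
                 * (exp (alpha_plus s2 mu q * x) * theta_plus s2 mu q
                    - exp (alpha_minus s2 mu q * x) * theta_minus s2 mu q))
            \<and> (q = 0 \<longrightarrow>
               ((\<lambda>n. Delta_W s2 mu q x (hs n) / (hs n)^2) \<longlonglongrightarrow>
                  - (2/3) * mu^2 * x / s2^3 * exp (- 2 * mu * x / s2)))))"
proof (intro conjI impI)
  assume "q = 0 \<and> mu = 0"
  then show "\<forall>h>0. \<forall>x\<in>Zpp h. Delta_W s2 mu q x h = 0"
    using Delta_zero[OF s2] by auto
next
  assume nz: "max q \<bar>mu\<bar> > 0"
  show "\<exists>A0>0. \<exists>h0>0. \<forall>h. 0 < h \<and> h < h0 \<longrightarrow>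
          (\<forall>x\<in>Zpp h. x * h^2 \<le> 1 \<longrightarrow>
             \<bar>Delta_W s2 mu q x h\<bar> \<le> A0 * h^2 * (1 + x) * exp (alpha_plus s2 mu q * x))"
    by (rule part_i[OF s2 q nz])
  show "\<forall>hs :: nat \<Rightarrow> real. \<forall>x.
          (\<forall>n. hs n > 0) \<and> decseq hs \<and> hs \<longlonglongrightarrow> 0 \<and>
          (\<forall>n. hs n / hs (Suc n) \<in> \<nat>) \<and> x \<in> (\<Union>n. Zpp (hs n)) \<longrightarrow>
            ((\<lambda>n. Delta_W s2 mu q x (hs n) / (hs n)^2) \<longlonglongrightarrow>
               q^2 / (2 * (mu^2 + 2 * s2 * q)) * W s2 mu q x
               + x / sqrt (mu^2 + 2 * s2 * q)
                 * (exp (alpha_plus s2 mu q * x) * theta_plus s2 mu q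
                    - exp (alpha_minus s2 mu q * x) * theta_minus s2 mu q))
            \<and> (q = 0 \<longrightarrow>
               ((\<lambda>n. Delta_W s2 mu q x (hs n) / (hs n)^2) \<longlonglongrightarrow>
                  - (2/3) * mu^2 * x / s2^3 * exp (- 2 * mu * x / s2)))"
  proof (intro allI impI conjI)
    fix hs :: "nat \<Rightarrow> real" and x
    assume H: "(\<forall>n. hs n > 0) \<and> decseq hs \<and> hs \<longlonglongrightarrow> 0 \<and>
          (\<forall>n. hs n / hs (Suc n) \<in> \<nat>) \<and> x \<in> (\<Union>n. Zpp (hs n))"
    have L: "((\<lambda>n. Delta_W s2 mu q x (hs n) / (hs n)^2) \<longlonglongrightarrow>
               q^2 / (2 * (mu^2 + 2 * s2 * q)) * W s2 mu q x
               + x / sqrt (mu^2 + 2 * s2 * q)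
                 * (exp (alpha_plus s2 mu q * x) * theta_plus s2 mu q
                    - exp (alpha_minus s2 mu q * x) * theta_minus s2 mu q))"
      by (rule part_ii[OF s2 q nz]) (use H in auto)
    then show "((\<lambda>n. Delta_W s2 mu q x (hs n) / (hs n)^2) \<longlonglongrightarrow>
               q^2 / (2 * (mu^2 + 2 * s2 * q)) * W s2 mu q x
               + x / sqrt (mu^2 + 2 * s2 * q)
                 * (exp (alpha_plus s2 mu q * x) * theta_plus s2 mu q
                    - exp (alpha_minus s2 mu q * x) * theta_minus s2 mu q))" .
    assume q0: "q = 0"
    then have mu0: "mu \<noteq> 0" using nz by auto
    show "((\<lambda>n. Delta_W s2 mu q x (hs n) / (hs n)^2) \<longlonglongrightarrow>
                  - (2/3) * mu^2 * x / s2^3 * exp (- 2 * mu * x / s2))"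
      using L q0_value[OF s2 mu0, of x] unfolding q0 by simp
  qed
qed

end
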